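(* Suppose all bidders' valuations are constrained additive over independent items. Let $D=\times_{i,j}D_{ij}$ and $\hat D=\times_{i,j}\hat D_{ij}$, where each $D_{ij}$ and $\hat D_{ij}$ is supported on $[0,H]$ and $\|D_{ij}-\hat D_{ij}\|_K\le\xi$ for all $i\in[n]$, $j\in[m]$. For any sequential posted price with entry fee mechanism (SPEM), let $\textsc{Rev}$ and $\widehat{\textsc{Rev}}$ be its expected revenue under $D$ and $\hat D$ respectively. Then $$\left|\textsc{Rev}-\widehat{\textsc{Rev}}\right|\le2nm\xi\cdot\left(mH+\mathrm{OPT}\right).$$
   Context: There are $n$ bidders and $m$ items; bidder $i$'s type is $t_i=(t_{i1},\dots,t_{im})$ with $t_{ij}$ (her value for item $j$) drawn independently from $D_{ij}$ (or $\hat D_{ij}$). Constrained additive: $v_i(t_i,S)=\max_{R\subseteq S,R\in\mathcal I_i}\sum_{j\in R}t_{ij}$ for a downward-closed $\mathcal I_i\subseteq2^{[m]}$. Kolmogorov distance: $\|P-Q\|_K=\sup_x|\Pr_P[X\le x]-\Pr_Q[X\le x]|$. An SPEM is given by prices $\{p_{ij}\}$ and entry fee functions $\delta_i:2^{[m]}\to\mathbb R$; starting with $S=[m]$, bidders $i=1,\dots,n$ are visited in order; bidder $i$ is shown the available set $S$ and entry fee $\delta_i(S)$; if she pays the fee she receives her favorite bundle $S_i^*\in\arg\max_{S'\subseteq S}v_i(t_i,S')-\sum_{j\in S'}p_{ij}$, pays $\sum_{j\in S_i^*}p_{ij}$, and $S\leftarrow S\setminus S_i^*$; otherwise she gets and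 pays nothing. OPT denotes the optimal expected revenue achievable by any randomized BIC mechanism. *)

theory Defs
  imports "HOL-Probability.Probability"
begin

text \<open>Bidders are 0..<n (visited in this order), items are 0..<m.
  A type profile is a function t :: nat \<times> nat \<Rightarrow> real, t (i,j) = value of bidder i for item j.\<close>

definition constrained_family :: "nat \<Rightarrow> nat set set \<Rightarrow> bool" where
  "constrained_family m F \<longleftrightarrow> {} \<in> F \<and> (\<forall>S\<in>F. S \<subseteq> {..<m}) \<and> (\<forall>S\<in>F. \<forall>T. T \<subseteq> S \<longrightarrow> T \<in> F)"

definition val :: "(nat \<Rightarrow> nat set set) \<Rightarrow> nat \<Rightarrow> (nat \<Rightarrow> real) \<Rightarrow> nat set \<Rightarrow> real" where
  "val I i ti S = Max ((\<lambda>R. \<Sum>j\<in>R. ti j) ` {R. R \<subseteq> S \<and> R \<in> I i})"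

definition kolmogorov_dist :: "real measure \<Rightarrow> real measure \<Rightarrow> real" where
  "kolmogorov_dist P Q = (SUP x::real. \<bar>measure P {..x} - measure Q {..x}\<bar>)"

definition prof :: "nat \<Rightarrow> nat \<Rightarrow> (nat \<Rightarrow> nat \<Rightarrow> real measure) \<Rightarrow> (nat \<times> nat \<Rightarrow> real) measure" where
  "prof n m D = (\<Pi>\<^sub>M ij \<in> {..<n} \<times> {..<m}. D (fst ij) (snd ij))"

definition util :: "(nat \<Rightarrow> nat set set) \<Rightarrow> (nat \<Rightarrow> nat \<Rightarrow> real) \<Rightarrow> nat \<Rightarrow> (nat \<Rightarrow> real) \<Rightarrow> nat set \<Rightarrow> real" where
  "util I pr i ti B = val I i ti B - (\<Sum>j\<in>B. pr i j)"

text \<open>Favorite bundle among subsets of S; ties broken by the (injective) priority rk i.\<close>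
definition fav :: "(nat \<Rightarrow> nat set set) \<Rightarrow> (nat \<Rightarrow> nat \<Rightarrow> real) \<Rightarrow> (nat \<Rightarrow> nat set \<Rightarrow> nat)
    \<Rightarrow> nat \<Rightarrow> (nat \<Rightarrow> real) \<Rightarrow> nat set \<Rightarrow> nat set" where
  "fav I pr rk i ti S =
     (ARG_MIN (rk i) B. B \<subseteq> S \<and> util I pr i ti B = Max (util I pr i ti ` Pow S))"

text \<open>State after visiting bidders 0..<i: (available items, revenue collected so far).
  A bidder pays the entry fee iff the utility of her favorite bundle is at least the fee.\<close>
primrec spem_run :: "nat \<Rightarrow> (nat \<Rightarrow> nat set set) \<Rightarrow> (nat \<Rightarrow> nat \<Rightarrow> real) \<Rightarrow> (nat \<Rightarrow> nat set \<Rightarrow> real)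
    \<Rightarrow> (nat \<Rightarrow> nat set \<Rightarrow> nat) \<Rightarrow> (nat \<times> nat \<Rightarrow> real) \<Rightarrow> nat \<Rightarrow> nat set \<times> real" where
  "spem_run m I pr \<delta> rk t 0 = ({..<m}, 0)"
| "spem_run m I pr \<delta> rk t (Suc i) =
     (let (S, r) = spem_run m I pr \<delta> rk t i;
          ti = (\<lambda>j. t (i, j));
          B = fav I pr rk i ti S
      in if util I pr i ti B \<ge> \<delta> i S
         then (S - B, r + \<delta> i S + (\<Sum>j\<in>B. pr i j))
         else (S, r))"

definition spem_rev :: "nat \<Rightarrow> nat \<Rightarrow> (nat \<Rightarrow> nat set set) \<Rightarrow> (nat \<Rightarrow> nat \<Rightarrow> real) \<Rightarrow> (nat \<Rightarrow> nat set \<Rightarrow> real)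
    \<Rightarrow> (nat \<Rightarrow> nat set \<Rightarrow> nat) \<Rightarrow> (nat \<times> nat \<Rightarrow> real) \<Rightarrow> real" where
  "spem_rev n m I pr \<delta> rk t = snd (spem_run m I pr \<delta> rk t n)"

definition spem_exp_rev :: "nat \<Rightarrow> nat \<Rightarrow> (nat \<Rightarrow> nat set set) \<Rightarrow> (nat \<Rightarrow> nat \<Rightarrow> real) \<Rightarrow> (nat \<Rightarrow> nat set \<Rightarrow> real)
    \<Rightarrow> (nat \<Rightarrow> nat set \<Rightarrow> nat) \<Rightarrow> (nat \<Rightarrow> nat \<Rightarrow> real measure) \<Rightarrow> real" where
  "spem_exp_rev n m I pr \<delta> rk D = (\<integral>t. spem_rev n m I pr \<delta> rk t \<partial>prof n m D)"

definition upd_bidder :: "nat \<Rightarrow> (nat \<times> nat \<Rightarrow> real) \<Rightarrow> nat \<Rightarrow> (nat \<Rightarrow> real) \<Rightarrow> nat \<times> nat \<Rightarrow> real" where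
  "upd_bidder m t i s = (\<lambda>(k, j). if k = i \<and> j < m then s j else t (k, j))"

definition in_box :: "nat \<Rightarrow> real \<Rightarrow> (nat \<Rightarrow> real) \<Rightarrow> bool" where
  "in_box m H s \<longleftrightarrow> (\<forall>j<m. 0 \<le> s j \<and> s j \<le> H)"

text \<open>x t : distribution over allocations (bidder \<mapsto> bundle); p i t : payment of bidder i.\<close>
definition feasible_alloc :: "nat \<Rightarrow> nat \<Rightarrow> ((nat \<times> nat \<Rightarrow> real) \<Rightarrow> (nat \<Rightarrow> nat set) pmf) \<Rightarrow> bool" where
  "feasible_alloc n m x \<longleftrightarrow>
     (\<forall>t. \<forall>A\<in>set_pmf (x t). (\<forall>i<n. A i \<subseteq> {..<m}) \<and> (\<forall>i<n. \<forall>k<n. i \<noteq> k \<longrightarrow> A i \<inter> A k = {}))"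

text \<open>Interim expected utility of bidder i with true type ti reporting s (others truthful, drawn from D).\<close>
definition interim_util :: "nat \<Rightarrow> nat \<Rightarrow> (nat \<Rightarrow> nat set set) \<Rightarrow> (nat \<Rightarrow> nat \<Rightarrow> real measure)
    \<Rightarrow> ((nat \<times> nat \<Rightarrow> real) \<Rightarrow> (nat \<Rightarrow> nat set) pmf) \<Rightarrow> (nat \<Rightarrow> (nat \<times> nat \<Rightarrow> real) \<Rightarrow> real)
    \<Rightarrow> nat \<Rightarrow> (nat \<Rightarrow> real) \<Rightarrow> (nat \<Rightarrow> real) \<Rightarrow> real" where
  "interim_util n m I D x p i ti s =
     (\<integral>t. (measure_pmf.expectation (x (upd_bidder m t i s)) (\<lambda>A. val I i ti (A i))
           - p i (upd_bidder m t i s)) \<partial>prof n m D)"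

definition well_defined_mech :: "nat \<Rightarrow> nat \<Rightarrow> real \<Rightarrow> (nat \<Rightarrow> nat set set) \<Rightarrow> (nat \<Rightarrow> nat \<Rightarrow> real measure)
    \<Rightarrow> ((nat \<times> nat \<Rightarrow> real) \<Rightarrow> (nat \<Rightarrow> nat set) pmf) \<Rightarrow> (nat \<Rightarrow> (nat \<times> nat \<Rightarrow> real) \<Rightarrow> real) \<Rightarrow> bool" where
  "well_defined_mech n m H I D x p \<longleftrightarrow>
     feasible_alloc n m x \<and>
     (\<forall>i<n. integrable (prof n m D) (p i)) \<and>
     (\<forall>i<n. \<forall>s. in_box m H s \<longrightarrow>
        integrable (prof n m D) (\<lambda>t. p i (upd_bidder m t i s)) \<and>
        (\<forall>ti. in_box m H ti \<longrightarrow> integrable (prof n m D)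
            (\<lambda>t. measure_pmf.expectation (x (upd_bidder m t i s)) (\<lambda>A. val I i ti (A i)))))"

definition BIC_IR_mech :: "nat \<Rightarrow> nat \<Rightarrow> real \<Rightarrow> (nat \<Rightarrow> nat set set) \<Rightarrow> (nat \<Rightarrow> nat \<Rightarrow> real measure)
    \<Rightarrow> ((nat \<times> nat \<Rightarrow> real) \<Rightarrow> (nat \<Rightarrow> nat set) pmf) \<Rightarrow> (nat \<Rightarrow> (nat \<times> nat \<Rightarrow> real) \<Rightarrow> real) \<Rightarrow> bool" where
  "BIC_IR_mech n m H I D x p \<longleftrightarrow>
     well_defined_mech n m H I D x p \<and>
     (\<forall>i<n. \<forall>ti s. in_box m H ti \<longrightarrow> in_box m H s \<longrightarrow>
        interim_util n m I D x p i ti ti \<ge> interim_util n m I D x p i ti s \<and>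
        interim_util n m I D x p i ti ti \<ge> 0)"

definition mech_rev :: "nat \<Rightarrow> nat \<Rightarrow> (nat \<Rightarrow> nat \<Rightarrow> real measure) \<Rightarrow> (nat \<Rightarrow> (nat \<times> nat \<Rightarrow> real) \<Rightarrow> real) \<Rightarrow> real" where
  "mech_rev n m D p = (\<integral>t. (\<Sum>i<n. p i t) \<partial>prof n m D)"

definition OPT :: "nat \<Rightarrow> nat \<Rightarrow> real \<Rightarrow> (nat \<Rightarrow> nat set set) \<Rightarrow> (nat \<Rightarrow> nat \<Rightarrow> real measure) \<Rightarrow> real" where
  "OPT n m H I D = Sup {mech_rev n m D p | x p. BIC_IR_mech n m H I D x p}"

end

theory Submission
  imports Defs
begin

definition upper :: "real set \<Rightarrow> bool" where
  "upper U \<longleftrightarrow> (\<forall>x\<in>U. \<forall>y. x \<le> y \<longrightarrow> y \<in> U)"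

lemma upper_cases:
  assumes "upper U"
  shows "U = {} \<or> U = UNIV \<or> (\<exists>c. U = {c..} \<or> U = {c<..})"
proof (cases "U = {} \<or> U = UNIV")
  case True then show ?thesis by auto
next
  case False
  then obtain u z where u: "u \<in> U" and z: "z \<notin> U" by auto
  have lb: "\<forall>v\<in>U. z \<le> v" using assms z unfolding upper_def
    by (metis linorder_le_cases)
  hence bdd: "bdd_below U" by (auto intro: bdd_belowI)
  define c where "c = Inf U"
  have c1: "\<forall>v\<in>U. c \<le> v" using bdd c_def by (auto intro: cInf_lower)
  have c2: "\<forall>y>c. y \<in> U"
  proof (intro allI impI)
    fix y assume "y > c"
    then obtain v where "v \<in> U" "v < y" using cInf_less_iff[of U y] u bdd c_def by auto
    then show "y \<in> U" using assms unfolding upper_def by auto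
  qed
  show ?thesis
  proof (cases "c \<in> U")
    case True
    then have "U = {c..}" using c1 c2 by (auto simp: le_less)
    then show ?thesis by blast
  next
    case False
    then have "U = {c<..}" using c1 c2 by (auto simp: le_less)
    then show ?thesis by blast
  qed
qed

lemma upper_borel: "upper U \<Longrightarrow> U \<in> sets borel"
  using upper_cases[of U] by auto

lemma upper_Int: "upper U \<Longrightarrow> upper V \<Longrightarrow> upper (U \<inter> V)"
  unfolding upper_def by auto

lemma upper_atLeast: "upper {c..}" and upper_greaterThan: "upper {c<..}"
  and upper_empty: "upper {}" 
  unfolding upper_def by auto

lemma kol_le:
  assumes P: "prob_space P" and Q: "prob_space Q" and K: "kolmogorov_dist P Q \<le> \<xi>"
  shows "\<bar>measure P {..x} - measure Q {..x}\<bar> \<le> \<xi>"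
proof -
  have "bdd_above ((\<lambda>x. \<bar>measure P {..x} - measure Q {..x}\<bar>) ` UNIV)"
  proof (rule bdd_aboveI2)
    fix x
    have "measure P {..x} \<le> 1" using prob_space.prob_le_1[OF P] .
    moreover have "measure Q {..x} \<le> 1" using prob_space.prob_le_1[OF Q] .
    ultimately show "\<bar>measure P {..x} - measure Q {..x}\<bar> \<le> 2"
      using measure_nonneg[of P "{..x}"] measure_nonneg[of Q "{..x}"] by linarith
  qed
  then have "\<bar>measure P {..x} - measure Q {..x}\<bar> \<le> kolmogorov_dist P Q"
    unfolding kolmogorov_dist_def by (rule cSUP_upper[OF UNIV_I])
  then show ?thesis using K by linarith
qed

lemma kol_lt:
  assumes P: "prob_space P" and Q: "prob_space Q" and K: "kolmogorov_dist P Q \<le> \<xi>"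
    and sP: "sets P = sets borel" and sQ: "sets Q = sets borel"
  shows "\<bar>measure P {..<x} - measure Q {..<x}\<bar> \<le> \<xi>"
proof -
  interpret P: prob_space P by fact
  interpret Q: prob_space Q by fact
  define A where "A = (\<lambda>n::nat. {..x - 1 / Suc n})"
  have inc: "incseq A" unfolding A_def incseq_def
  proof (intro allI impI)
    fix a b :: nat assume "a \<le> b"
    then have "1 / real (Suc b) \<le> 1 / real (Suc a)" by (simp add: frac_le)
    then show "{..x - 1 / real (Suc a)} \<subseteq> {..x - 1 / real (Suc b)}" by auto
  qed
  have U: "(\<Union>n. A n) = {..<x}"
  proof safe
    fix y n assume "y \<in> A n"
    then have "y \<le> x - 1 / real (Suc n)" unfolding A_def by simp
    moreover have "0 < 1 / real (Suc n)" by simp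
    ultimately show "y < x" by linarith
  next
    fix y assume "y < x"
    then obtain n where "1 / real (Suc n) < x - y"
      by (metis diff_gt_0_iff_gt nat_approx_posE)
    then have "y \<le> x - 1 / real (Suc n)" by linarith
    then show "y \<in> (\<Union>n. A n)" unfolding A_def by blast
  qed
  have rP: "range A \<subseteq> sets P" using sP unfolding A_def by (simp add: image_subset_iff)
  have rQ: "range A \<subseteq> sets Q" using sQ unfolding A_def by (simp add: image_subset_iff)
  have t1: "(\<lambda>n. measure P (A n)) \<longlonglongrightarrow> measure P {..<x}"
    using P.finite_Lim_measure_incseq[OF rP inc] unfolding U .
  have t2: "(\<lambda>n. measure Q (A n)) \<longlonglongrightarrow> measure Q {..<x}"
    using Q.finite_Lim_measure_incseq[OF rQ inc] unfolding U .
  have t: "(\<lambda>n. \<bar>measure P (A n) - measure Q (A n)\<bar>) \<longlonglongrightarrow> \<bar>measure P {..<x} - measure Q {..<x}\<bar>"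
    by (intro tendsto_rabs tendsto_diff t1 t2)
  have b: "\<And>n. \<bar>measure P (A n) - measure Q (A n)\<bar> \<le> \<xi>"
    unfolding A_def by (rule kol_le[OF P Q K])
  show ?thesis
    by (rule LIMSEQ_le_const2[OF t]) (use b in blast)
qed

lemma kol_upper:
  assumes P: "prob_space P" and Q: "prob_space Q" and K: "kolmogorov_dist P Q \<le> \<xi>"
    and sP: "sets P = sets borel" and sQ: "sets Q = sets borel" and U: "upper U"
  shows "\<bar>measure P U - measure Q U\<bar> \<le> \<xi>"
proof -
  interpret P: prob_space P by fact
  interpret Q: prob_space Q by fact
  have spP: "space P = UNIV" using sets_eq_imp_space_eq[OF sP] by simp
  have spQ: "space Q = UNIV" using sets_eq_imp_space_eq[OF sQ] by simp
  have x0: "0 \<le> \<xi>" using kol_le[OF P Q K, of 0] by linarith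
  have cP: "measure P (- A) = 1 - measure P A" if "A \<in> sets borel" for A
    using P.prob_compl[of A] that sP spP by (simp add: Compl_eq_Diff_UNIV)
  have cQ: "measure Q (- A) = 1 - measure Q A" if "A \<in> sets borel" for A
    using Q.prob_compl[of A] that sQ spQ by (simp add: Compl_eq_Diff_UNIV)
  from upper_cases[OF U] show ?thesis
  proof (elim disjE exE)
    assume "U = {}" then show ?thesis using x0 by simp
  next
    assume "U = UNIV" then show ?thesis using x0 spP spQ P.prob_space Q.prob_space by simp
  next
    fix c assume "U = {c..}"
    then have "U = - {..<c}" by auto
    then show ?thesis using cP[of "{..<c}"] cQ[of "{..<c}"] kol_lt[OF P Q K sP sQ, of c] by simp
  next
    fix c assume "U = {c<..}"
    then have "U = - {..c}" by auto
    then show ?thesis using cP[of "{..c}"] cQ[of "{..c}"] kol_le[OF P Q K, of c] by simp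
  qed
qed

definition tsf :: "real \<Rightarrow> real \<Rightarrow> (real \<Rightarrow> real) \<Rightarrow> bool" where
  "tsf H C f \<longleftrightarrow> (\<exists>U1 U2 g0 g1 g2. upper U1 \<and> upper U2 \<and> U2 \<subseteq> U1 \<and>
     g0 \<in> {0..C} \<and> g1 \<in> {0..C} \<and> g2 \<in> {0..C} \<and>
     (\<forall>x\<in>{0..H}. f x = (if x \<in> U2 then g2 else if x \<in> U1 then g1 else g0)))"

lemma tsf_bound:
  assumes P: "prob_space P" and Q: "prob_space Q" and K: "kolmogorov_dist P Q \<le> \<xi>"
    and sP: "sets P = sets borel" and sQ: "sets Q = sets borel"
    and HP: "measure P {0..H} = 1" and HQ: "measure Q {0..H} = 1"
    and f: "f \<in> borel_measurable borel" and T: "tsf H C f"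
  shows "\<bar>integral\<^sup>L P f - integral\<^sup>L Q f\<bar> \<le> 2 * \<xi> * C"
proof -
  interpret P: prob_space P by fact
  interpret Q: prob_space Q by fact
  obtain U1 U2 g0 g1 g2 where U1: "upper U1" and U2: "upper U2" and U12: "U2 \<subseteq> U1"
    and g: "g0 \<in> {0..C}" "g1 \<in> {0..C}" "g2 \<in> {0..C}"
    and fe: "\<forall>x\<in>{0..H}. f x = (if x \<in> U2 then g2 else if x \<in> U1 then g1 else g0)"
    using T unfolding tsf_def by blast
  define h where "h x = g0 + (g1 - g0) * indicator U1 x + (g2 - g1) * indicator U2 x" for x :: real
  have fh: "\<forall>x\<in>{0..H}. f x = h x" using fe U12 unfolding h_def by (auto simp: indicator_def)
  have b1: "U1 \<in> sets borel" "U2 \<in> sets borel" using U1 U2 upper_borel by auto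
  have hm: "h \<in> borel_measurable borel" unfolding h_def using b1 by measurable
  have intg: "integral\<^sup>L M f = g0 + (g1 - g0) * measure M U1 + (g2 - g1) * measure M U2"
    if M: "prob_space M" "sets M = sets borel" "measure M {0..H} = 1" for M
  proof -
    interpret M: prob_space M by fact
    have sp: "space M = UNIV" using sets_eq_imp_space_eq[OF M(2)] by simp
    have ae: "AE x in M. x \<in> {0..H}" using M.AE_prob_1[OF M(3)] .
    have "integral\<^sup>L M f = integral\<^sup>L M h"
    proof (rule integral_cong_AE)
      show "f \<in> borel_measurable M" using f measurable_cong_sets[OF M(2) refl, where N="borel :: real measure"] by (simp only:)
      show "h \<in> borel_measurable M" using hm measurable_cong_sets[OF M(2) refl, where N="borel :: real measure"] by (simp only:)
      show "AE x in M. f x = h x" using ae by (rule eventually_mono) (use fh in simp)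
    qed
    note calc1 = this
    have bU: "U1 \<in> sets M" "U2 \<in> sets M" using b1 M(2) by auto
    have i1: "integrable M (\<lambda>x. (g1 - g0) * indicator U1 x)"
      by (intro integrable_mult_right integrable_real_indicator bU) (simp add: less_top[symmetric])
    have i2: "integrable M (\<lambda>x. (g2 - g1) * indicator U2 x)"
      by (intro integrable_mult_right integrable_real_indicator bU) (simp add: less_top[symmetric])
    have "integral\<^sup>L M h = integral\<^sup>L M (\<lambda>x. g0) + integral\<^sup>L M (\<lambda>x. (g1 - g0) * indicator U1 x + (g2 - g1) * indicator U2 x)"
      unfolding h_def add.assoc by (rule Bochner_Integration.integral_add) (use i1 i2 in auto)
    also have "integral\<^sup>L M (\<lambda>x. (g1 - g0) * indicator U1 x + (g2 - g1) * indicator U2 x)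
       = integral\<^sup>L M (\<lambda>x. (g1 - g0) * indicator U1 x) + integral\<^sup>L M (\<lambda>x. (g2 - g1) * indicator U2 x)"
      by (rule Bochner_Integration.integral_add[OF i1 i2])
    also have "integral\<^sup>L M (\<lambda>x. (g1 - g0) * indicator U1 x) = (g1 - g0) * measure M U1"
      using sp by simp
    also have "integral\<^sup>L M (\<lambda>x. (g2 - g1) * indicator U2 x) = (g2 - g1) * measure M U2"
      using sp by simp
    also have "integral\<^sup>L M (\<lambda>x. g0) = g0" by (simp add: M.prob_space)
    finally have "integral\<^sup>L M h = g0 + (g1 - g0) * measure M U1 + (g2 - g1) * measure M U2" by simp
    with calc1 show ?thesis by simp
  qed
  have d: "integral\<^sup>L P f - integral\<^sup>L Q f = (g1 - g0) * (measure P U1 - measure Q U1) + (g2 - g1) * (measure P U2 - measure Q U2)"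
    using intg[OF P sP HP] intg[OF Q sQ HQ] by (simp add: algebra_simps)
  have k1: "\<bar>measure P U1 - measure Q U1\<bar> \<le> \<xi>" using kol_upper[OF P Q K sP sQ U1] .
  have k2: "\<bar>measure P U2 - measure Q U2\<bar> \<le> \<xi>" using kol_upper[OF P Q K sP sQ U2] .
  have a1: "\<bar>g1 - g0\<bar> \<le> C" "\<bar>g2 - g1\<bar> \<le> C" using g by auto
  have "\<bar>(g1 - g0) * (measure P U1 - measure Q U1)\<bar> \<le> C * \<xi>"
    unfolding abs_mult by (rule mult_mono) (use a1 k1 g in auto)
  moreover have "\<bar>(g2 - g1) * (measure P U2 - measure Q U2)\<bar> \<le> C * \<xi>"
    unfolding abs_mult by (rule mult_mono) (use a1 k2 g in auto)
  moreover have e: "2 * \<xi> * C = C * \<xi> + C * \<xi>" by (simp add: algebra_simps)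
  ultimately show ?thesis unfolding d e
    using abs_triangle_ineq[of "(g1 - g0) * (measure P U1 - measure Q U1)" "(g2 - g1) * (measure P U2 - measure Q U2)"]
    by linarith
qed

lemma prob_integral_bdd:
  fixes g :: "'a \<Rightarrow> real"
  assumes M: "prob_space M" and gm: "g \<in> borel_measurable M" and gb: "\<forall>x\<in>space M. g x \<in> {0..C}"
  shows "integrable M g" "integral\<^sup>L M g \<in> {0..C}"
proof -
  interpret prob_space M by fact
  show ig: "integrable M g"
    by (rule integrable_const_bound[where B=C]) (use gb gm in \<open>auto intro!: AE_I2\<close>)
  have "integral\<^sup>L M g \<le> integral\<^sup>L M (\<lambda>_. C)"
    by (rule integral_mono[OF ig]) (use gb in auto)
  moreover have "0 \<le> integral\<^sup>L M g" by (rule Bochner_Integration.integral_nonneg) (use gb in auto)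
  ultimately show "integral\<^sup>L M g \<in> {0..C}" by (simp add: prob_space)
qed

definition box :: "'k set \<Rightarrow> real \<Rightarrow> ('k \<Rightarrow> real) \<Rightarrow> bool" where
  "box K H t \<longleftrightarrow> (\<forall>k\<in>K. t k \<in> {0..H})"

lemma AE_box:
  assumes "finite K" and M: "\<forall>k\<in>K. prob_space (M k) \<and> measure (M k) {0..H} = 1"
  shows "AE t in PiM K M. box K H t"
  unfolding box_def
proof (rule AE_finite_allI[OF assms(1)])
  fix k assume k: "k \<in> K"
  interpret prob_space "M k" using M k by auto
  have ae: "AE x in M k. x \<in> {0..H}" by (rule AE_prob_1) (use M k in auto)
  show "AE t in PiM K M. t k \<in> {0..H}"
    by (rule AE_PiM_component[where P="\<lambda>x. x \<in> {0..H}" and M=M and I=K and i=k]) (use M k ae in auto)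
qed

lemma hybrid_aux:
  fixes M M' :: "'k \<Rightarrow> real measure"
  assumes fin: "finite K"
    and PM: "\<forall>k. prob_space (M k) \<and> sets (M k) = sets borel"
    and PM': "\<forall>k. prob_space (M' k) \<and> sets (M' k) = sets borel"
    and H: "0 \<le> H" and C: "0 \<le> C"
  shows "\<forall>f. (\<forall>k\<in>K. measure (M k) {0..H} = 1 \<and> measure (M' k) {0..H} = 1 \<and> kolmogorov_dist (M k) (M' k) \<le> \<xi>)
      \<longrightarrow> f \<in> borel_measurable (PiM K M) \<longrightarrow> (\<forall>t. f t \<in> {0..C})
      \<longrightarrow> (\<forall>k\<in>K. \<forall>t. box K H t \<longrightarrow> tsf H C (\<lambda>x. f (t(k:=x))))
      \<longrightarrow> \<bar>integral\<^sup>L (PiM K M) f - integral\<^sup>L (PiM K M') f\<bar> \<le> 2 * real (card K) * \<xi> * C"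
  using fin
proof (induction K rule: finite_induct)
  case empty
  then show ?case by (simp add: PiM_empty)
next
  case (insert k K0)
  show ?case
  proof (intro allI impI)
    fix f :: "('k \<Rightarrow> real) \<Rightarrow> real"
    assume hyp: "\<forall>k\<in>insert k K0. measure (M k) {0..H} = 1 \<and> measure (M' k) {0..H} = 1 \<and> kolmogorov_dist (M k) (M' k) \<le> \<xi>"
      and fm: "f \<in> borel_measurable (PiM (insert k K0) M)"
      and fb: "\<forall>t. f t \<in> {0..C}"
      and ft: "\<forall>k'\<in>insert k K0. \<forall>t. box (insert k K0) H t \<longrightarrow> tsf H C (\<lambda>x. f (t(k':=x)))"
    let ?K = "insert k K0"
    define N where "N = M(k := M' k)"
    have PN: "\<forall>k. prob_space (N k) \<and> sets (N k) = sets borel" using PM PM' unfolding N_def by auto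
    interpret PSM: product_sigma_finite M using PM by (simp add: product_sigma_finite_def prob_space_imp_sigma_finite)
    interpret PSM': product_sigma_finite M' using PM' by (simp add: product_sigma_finite_def prob_space_imp_sigma_finite)
    interpret PSN: product_sigma_finite N using PN by (simp add: product_sigma_finite_def prob_space_imp_sigma_finite)
    have pK0M: "prob_space (PiM K0 M)" by (rule prob_space_PiM) (use PM in auto)
    have pK0M': "prob_space (PiM K0 M')" by (rule prob_space_PiM) (use PM' in auto)
    have pKM: "prob_space (PiM ?K M)" by (rule prob_space_PiM) (use PM in auto)
    have pKM': "prob_space (PiM ?K M')" by (rule prob_space_PiM) (use PM' in auto)
    have pk: "prob_space (M k)" "prob_space (M' k)" using PM PM' by auto
    have sk: "sets (M k) = sets borel" "sets (M' k) = sets borel" using PM PM' by auto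
    have sK1: "sets (PiM ?K M') = sets (PiM ?K M)"
      by (rule sets_PiM_cong) (use PM PM' in auto)
    have sK2: "sets (PiM ?K N) = sets (PiM ?K M)"
      by (rule sets_PiM_cong) (use PM PN in auto)
    have NK0: "PiM K0 N = PiM K0 M" unfolding N_def by (rule PiM_cong) (use insert.hyps in auto)
    have fm': "f \<in> borel_measurable (PiM ?K M')" using fm measurable_cong_sets[OF sK1 refl, where N="borel :: real measure"] by (simp only:)
    have fmN: "f \<in> borel_measurable (PiM ?K N)" using fm measurable_cong_sets[OF sK2 refl, where N="borel :: real measure"] by (simp only:)
    have pm_gen: "(\<lambda>(x, y). f (x(k := y))) \<in> borel_measurable (PiM K0 L \<Otimes>\<^sub>M L k)"
      if "f \<in> borel_measurable (PiM ?K L)" for L :: "'k \<Rightarrow> real measure"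
      using measurable_comp[OF measurable_add_dim[of k K0 L] that] by (simp add: comp_def case_prod_unfold)
    have pmM: "(\<lambda>(x, y). f (x(k := y))) \<in> borel_measurable (PiM K0 M \<Otimes>\<^sub>M M k)" by (rule pm_gen[OF fm])
    have pmM': "(\<lambda>(x, y). f (x(k := y))) \<in> borel_measurable (PiM K0 M' \<Otimes>\<^sub>M M' k)" by (rule pm_gen[OF fm'])
    have pmN: "(\<lambda>(x, y). f (x(k := y))) \<in> borel_measurable (PiM K0 M \<Otimes>\<^sub>M M' k)"
      using pm_gen[OF fmN] NK0 by (simp add: N_def)
    have spk: "space (M k) = UNIV" "space (M' k) = UNIV"
      using sets_eq_imp_space_eq[OF sk(1)] sets_eq_imp_space_eq[OF sk(2)] by auto
    have fb': "\<forall>t\<in>space L. f t \<in> {0..C}" for L :: "('k \<Rightarrow> real) measure" using fb by auto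
    have e1: "integral\<^sup>L (PiM ?K M) f = (\<integral>x. (\<integral>y. f (x(k:=y)) \<partial>M k) \<partial>PiM K0 M)"
      by (rule PSM.product_integral_insert[OF insert.hyps(1,2)]) (rule prob_integral_bdd(1)[OF pKM fm fb'])
    have e2: "integral\<^sup>L (PiM ?K M') f = (\<integral>x. (\<integral>y. f (x(k:=y)) \<partial>M' k) \<partial>PiM K0 M')"
      by (rule PSM'.product_integral_insert[OF insert.hyps(1,2)]) (rule prob_integral_bdd(1)[OF pKM' fm' fb'])
    interpret PA: pair_sigma_finite "PiM K0 M" "M' k"
      unfolding pair_sigma_finite_def using prob_space_imp_sigma_finite[OF pK0M] prob_space_imp_sigma_finite[OF pk(2)] by auto
    interpret PB: pair_sigma_finite "PiM K0 M'" "M' k"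
      unfolding pair_sigma_finite_def using prob_space_imp_sigma_finite[OF pK0M'] prob_space_imp_sigma_finite[OF pk(2)] by auto
    have iA: "integrable (PiM K0 M \<Otimes>\<^sub>M M' k) (\<lambda>(x, y). f (x(k := y)))"
      by (rule prob_integral_bdd(1)[OF prob_space_pair[OF pK0M pk(2)] pmN]) (use fb in auto)
    have iB: "integrable (PiM K0 M' \<Otimes>\<^sub>M M' k) (\<lambda>(x, y). f (x(k := y)))"
      by (rule prob_integral_bdd(1)[OF prob_space_pair[OF pK0M' pk(2)] pmM']) (use fb in auto)
    have FA: "(\<integral>y. (\<integral>x. f (x(k:=y)) \<partial>PiM K0 M) \<partial>M' k) = (\<integral>x. (\<integral>y. f (x(k:=y)) \<partial>M' k) \<partial>PiM K0 M)"
      using PA.Fubini_integral[of "\<lambda>x y. f (x(k:=y))"] iA by simp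
    have FB: "(\<integral>y. (\<integral>x. f (x(k:=y)) \<partial>PiM K0 M') \<partial>M' k) = (\<integral>x. (\<integral>y. f (x(k:=y)) \<partial>M' k) \<partial>PiM K0 M')"
      using PB.Fubini_integral[of "\<lambda>x y. f (x(k:=y))"] iB by simp
    define g1 where "g1 x = (\<integral>y. f (x(k:=y)) \<partial>M k)" for x
    define g2 where "g2 x = (\<integral>y. f (x(k:=y)) \<partial>M' k)" for x
    define h1 where "h1 y = (\<integral>x. f (x(k:=y)) \<partial>PiM K0 M)" for y
    define h2 where "h2 y = (\<integral>x. f (x(k:=y)) \<partial>PiM K0 M')" for y
    have g1m: "g1 \<in> borel_measurable (PiM K0 M)" unfolding g1_def
      by (rule sigma_finite_measure.borel_measurable_lebesgue_integral[OF prob_space_imp_sigma_finite[OF pk(1)]]) (use pmM in simp)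
    have g2m: "g2 \<in> borel_measurable (PiM K0 M)" unfolding g2_def
      by (rule sigma_finite_measure.borel_measurable_lebesgue_integral[OF prob_space_imp_sigma_finite[OF pk(2)]]) (use pmN in simp)
    have swapm: "(\<lambda>(y, x). f (x(k := y))) \<in> borel_measurable (L2 \<Otimes>\<^sub>M L1)"
      if "(\<lambda>(x, y). f (x(k := y))) \<in> borel_measurable (L1 \<Otimes>\<^sub>M L2)" for L1 L2
    proof -
      have "(\<lambda>(x, y). f (x(k := y))) \<circ> (\<lambda>(x,y). (y, x)) \<in> borel_measurable (L2 \<Otimes>\<^sub>M L1)"
        by (rule measurable_comp[OF measurable_pair_swap' that])
      moreover have "(\<lambda>(x, y). f (x(k := y))) \<circ> (\<lambda>(x,y). (y, x)) = (\<lambda>(y, x). f (x(k := y)))"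
        by (auto simp: fun_eq_iff)
      ultimately show ?thesis by simp
    qed
    have h1m: "h1 \<in> borel_measurable (M' k)" unfolding h1_def
      by (rule sigma_finite_measure.borel_measurable_lebesgue_integral[OF prob_space_imp_sigma_finite[OF pK0M]]) (use swapm[OF pmN] in simp)
    have h2m: "h2 \<in> borel_measurable (M' k)" unfolding h2_def
      by (rule sigma_finite_measure.borel_measurable_lebesgue_integral[OF prob_space_imp_sigma_finite[OF pK0M']]) (use swapm[OF pmM'] in simp)
    have slice_m: "(\<lambda>y. f (x(k:=y))) \<in> borel_measurable L2"
      if "(\<lambda>(x, y). f (x(k := y))) \<in> borel_measurable (L1 \<Otimes>\<^sub>M L2)" "x \<in> space L1" for L1 L2 x
      using measurable_comp[OF measurable_Pair1'[OF that(2)] that(1)] by (simp add: comp_def)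
    have slice_m2: "(\<lambda>x. f (x(k:=y))) \<in> borel_measurable L1"
      if "(\<lambda>(x, y). f (x(k := y))) \<in> borel_measurable (L1 \<Otimes>\<^sub>M L2)" "y \<in> space L2" for L1 L2 y
      using measurable_comp[OF measurable_Pair2'[OF that(2)] that(1)] by (simp add: comp_def)
    have g1b: "g1 x \<in> {0..C}" if "x \<in> space (PiM K0 M)" for x
      unfolding g1_def by (rule prob_integral_bdd(2)[OF pk(1) slice_m[OF pmM that]]) (use fb in auto)
    have g2b: "g2 x \<in> {0..C}" if "x \<in> space (PiM K0 M)" for x
      unfolding g2_def by (rule prob_integral_bdd(2)[OF pk(2) slice_m[OF pmN that]]) (use fb in auto)
    have h1b: "h1 y \<in> {0..C}" for y
      unfolding h1_def by (rule prob_integral_bdd(2)[OF pK0M slice_m2[OF pmN]]) (use fb spk in auto)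
    have h2b: "h2 y \<in> {0..C}" for y
      unfolding h2_def by (rule prob_integral_bdd(2)[OF pK0M' slice_m2[OF pmM']]) (use fb spk in auto)
    have ig1: "integrable (PiM K0 M) g1" by (rule prob_integral_bdd(1)[OF pK0M g1m]) (use g1b in auto)
    have ig2: "integrable (PiM K0 M) g2" by (rule prob_integral_bdd(1)[OF pK0M g2m]) (use g2b in auto)
    have ih1: "integrable (M' k) h1" by (rule prob_integral_bdd(1)[OF pk(2) h1m]) (use h1b in auto)
    have ih2: "integrable (M' k) h2" by (rule prob_integral_bdd(1)[OF pk(2) h2m]) (use h2b in auto)
    have B1pt: "\<bar>g1 x - g2 x\<bar> \<le> 2 * \<xi> * C" if x: "x \<in> space (PiM K0 M)" "box K0 H x" for x
    proof -
      have bx: "box ?K H (x(k:=0))" using x(2) H unfolding box_def by auto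
      have T: "tsf H C (\<lambda>y. f (x(k:=y)))" using ft bx by force
      have mm: "(\<lambda>y. f (x(k:=y))) \<in> borel_measurable borel"
        using slice_m[OF pmM x(1)] measurable_cong_sets[OF sk(1) refl, where N="borel :: real measure"] by (simp only:)
      show ?thesis unfolding g1_def g2_def
        by (rule tsf_bound[OF pk(1) pk(2) _ sk(1) sk(2) _ _ mm T]) (use hyp in auto)
    qed
    have B1: "\<bar>integral\<^sup>L (PiM K0 M) g1 - integral\<^sup>L (PiM K0 M) g2\<bar> \<le> 2 * \<xi> * C"
    proof -
      have "\<bar>integral\<^sup>L (PiM K0 M) g1 - integral\<^sup>L (PiM K0 M) g2\<bar> = \<bar>integral\<^sup>L (PiM K0 M) (\<lambda>x. g1 x - g2 x)\<bar>"
        by (simp add: Bochner_Integration.integral_diff[OF ig1 ig2])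
      also have "\<dots> \<le> integral\<^sup>L (PiM K0 M) (\<lambda>x. \<bar>g1 x - g2 x\<bar>)"
        by (rule integral_abs_bound)
      also have "\<dots> \<le> integral\<^sup>L (PiM K0 M) (\<lambda>x. 2 * \<xi> * C)"
      proof (rule integral_mono_AE)
        show "integrable (PiM K0 M) (\<lambda>x. \<bar>g1 x - g2 x\<bar>)" using ig1 ig2 by auto
        show "integrable (PiM K0 M) (\<lambda>x. 2 * \<xi> * C)" using pK0M by (simp add: prob_space.finite_measure finite_measure.integrable_const)
        have "AE x in PiM K0 M. box K0 H x"
          by (rule AE_box[OF insert.hyps(1)]) (use PM hyp in auto)
        then show "AE x in PiM K0 M. \<bar>g1 x - g2 x\<bar> \<le> 2 * \<xi> * C"
          using AE_space by eventually_elim (use B1pt in auto)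
      qed
      also have "\<dots> = 2 * \<xi> * C" using pK0M by (simp add: prob_space.prob_space)
      finally show ?thesis .
    qed
    have IH: "\<bar>integral\<^sup>L (PiM K0 M) h - integral\<^sup>L (PiM K0 M') h\<bar> \<le> 2 * real (card K0) * \<xi> * C"
      if "(\<forall>k\<in>K0. measure (M k) {0..H} = 1 \<and> measure (M' k) {0..H} = 1 \<and> kolmogorov_dist (M k) (M' k) \<le> \<xi>)"
        "h \<in> borel_measurable (PiM K0 M)" "\<forall>t. h t \<in> {0..C}"
        "\<forall>k\<in>K0. \<forall>t. box K0 H t \<longrightarrow> tsf H C (\<lambda>x. h (t(k:=x)))" for h
      using insert.IH that by blast
    have B2pt: "\<bar>h1 y - h2 y\<bar> \<le> 2 * real (card K0) * \<xi> * C" if y: "y \<in> {0..H}" for y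
      unfolding h1_def h2_def
    proof (rule IH)
      show "\<forall>k\<in>K0. measure (M k) {0..H} = 1 \<and> measure (M' k) {0..H} = 1 \<and> kolmogorov_dist (M k) (M' k) \<le> \<xi>"
        using hyp by auto
      show "(\<lambda>x. f (x(k:=y))) \<in> borel_measurable (PiM K0 M)" by (rule slice_m2[OF pmN]) (use spk in auto)
      show "\<forall>t. f (t(k:=y)) \<in> {0..C}" using fb by auto
      show "\<forall>k'\<in>K0. \<forall>t. box K0 H t \<longrightarrow> tsf H C (\<lambda>x. f (t(k' := x, k := y)))"
      proof (intro ballI allI impI)
        fix k' t assume k': "k' \<in> K0" and bt: "box K0 H t"
        have kk: "k' \<noteq> k" using k' insert.hyps(2) by auto
        have bx: "box ?K H (t(k:=y))" using bt y unfolding box_def by auto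
        have "tsf H C (\<lambda>x. f ((t(k:=y))(k':=x)))" using ft k' bx by auto
        moreover have "(\<lambda>x. f ((t(k:=y))(k':=x))) = (\<lambda>x. f (t(k' := x, k := y)))"
          using kk by (auto simp: fun_upd_twist)
        ultimately show "tsf H C (\<lambda>x. f (t(k' := x, k := y)))" by simp
      qed
    qed
    have B2: "\<bar>integral\<^sup>L (M' k) h1 - integral\<^sup>L (M' k) h2\<bar> \<le> 2 * real (card K0) * \<xi> * C"
    proof -
      have "\<bar>integral\<^sup>L (M' k) h1 - integral\<^sup>L (M' k) h2\<bar> = \<bar>integral\<^sup>L (M' k) (\<lambda>x. h1 x - h2 x)\<bar>"
        by (simp add: Bochner_Integration.integral_diff[OF ih1 ih2])
      also have "\<dots> \<le> integral\<^sup>L (M' k) (\<lambda>x. \<bar>h1 x - h2 x\<bar>)"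
        by (rule integral_abs_bound)
      also have "\<dots> \<le> integral\<^sup>L (M' k) (\<lambda>x. 2 * real (card K0) * \<xi> * C)"
      proof (rule integral_mono_AE)
        show "integrable (M' k) (\<lambda>x. \<bar>h1 x - h2 x\<bar>)" using ih1 ih2 by auto
        show "integrable (M' k) (\<lambda>x. 2 * real (card K0) * \<xi> * C)" using pk(2) by (simp add: prob_space.finite_measure finite_measure.integrable_const)
        have "AE y in M' k. y \<in> {0..H}" by (rule prob_space.AE_prob_1[OF pk(2)]) (use hyp in auto)
        then show "AE y in M' k. \<bar>h1 y - h2 y\<bar> \<le> 2 * real (card K0) * \<xi> * C"
          by eventually_elim (use B2pt in auto)
      qed
      also have "\<dots> = 2 * real (card K0) * \<xi> * C" using pk(2) by (simp add: prob_space.prob_space)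
      finally show ?thesis .
    qed
    have eq: "integral\<^sup>L (PiM ?K M) f - integral\<^sup>L (PiM ?K M') f
       = (integral\<^sup>L (PiM K0 M) g1 - integral\<^sup>L (PiM K0 M) g2) + (integral\<^sup>L (M' k) h1 - integral\<^sup>L (M' k) h2)"
      using e1 e2 FA FB unfolding g1_def g2_def h1_def h2_def by simp
    have cK: "real (card ?K) = real (card K0) + 1" using insert.hyps by simp
    have "\<bar>integral\<^sup>L (PiM ?K M) f - integral\<^sup>L (PiM ?K M') f\<bar> \<le> 2 * \<xi> * C + 2 * real (card K0) * \<xi> * C"
      unfolding eq using B1 B2 abs_triangle_ineq[of "integral\<^sup>L (PiM K0 M) g1 - integral\<^sup>L (PiM K0 M) g2" "integral\<^sup>L (M' k) h1 - integral\<^sup>L (M' k) h2"]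
      by linarith
    also have "\<dots> = 2 * real (card ?K) * \<xi> * C" unfolding cK by (simp add: algebra_simps)
    finally show "\<bar>integral\<^sup>L (PiM ?K M) f - integral\<^sup>L (PiM ?K M') f\<bar> \<le> 2 * real (card ?K) * \<xi> * C" .
  qed
qed

lemma am_mem:
  fixes rk :: "'b \<Rightarrow> nat"
  assumes "T \<noteq> {}"
  shows "arg_min rk (\<lambda>B. B \<in> T) \<in> T \<and> (\<forall>c\<in>T. rk (arg_min rk (\<lambda>B. B \<in> T)) \<le> rk c)"
proof -
  obtain b where "b \<in> T" using assms by auto
  from arg_min_nat_lemma[of "\<lambda>B. B \<in> T", OF this] show ?thesis by auto
qed

lemma am_unique:
  fixes rk :: "'b \<Rightarrow> nat"
  assumes inj: "inj_on rk A" and T: "T \<subseteq> A" and b: "b \<in> T" and min: "\<forall>c\<in>T. rk b \<le> rk c"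
  shows "arg_min rk (\<lambda>B. B \<in> T) = b"
proof -
  have "T \<noteq> {}" using b by auto
  from am_mem[OF this, of rk] have a: "arg_min rk (\<lambda>B. B \<in> T) \<in> T" "rk (arg_min rk (\<lambda>B. B \<in> T)) \<le> rk b"
    using b by auto
  then have "rk (arg_min rk (\<lambda>B. B \<in> T)) = rk b" using min by force
  then show ?thesis using inj T a(1) b by (auto dest: inj_onD)
qed

lemma one_switch:
  fixes u :: "'b \<Rightarrow> real \<Rightarrow> real" and rk :: "'b \<Rightarrow> nat"
  assumes fin: "finite A" and ne: "A \<noteq> {}" and inj: "inj_on rk A"
    and u: "\<And>B x. B \<in> A \<Longrightarrow> u B x = (if cap B then max (\<alpha> B) (\<beta> B + x) else \<alpha> B)"
  shows "\<exists>W b0 b1. upper W \<and> (\<forall>x. arg_min rk (\<lambda>B. B \<in> A \<and> u B x = Max ((\<lambda>B. u B x) ` A)) = (if x \<in> W then b1 else b0))"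
proof -
  define C0 where "C0 = Max (\<alpha> ` A)"
  define T0 where "T0 = {B\<in>A. \<alpha> B = C0}"
  have aC0: "\<And>B. B \<in> A \<Longrightarrow> \<alpha> B \<le> C0" unfolding C0_def using fin by auto
  have T0ne: "T0 \<noteq> {}"
  proof -
    have "Max (\<alpha> ` A) \<in> \<alpha> ` A" using fin ne by (intro Max_in) auto
    then obtain B where "B \<in> A" "\<alpha> B = C0" unfolding C0_def by auto
    then show ?thesis unfolding T0_def by auto
  qed
  define Cp where "Cp = {B\<in>A. cap B}"
  show ?thesis
  proof (cases "Cp = {}")
    case True
    then have uA: "\<And>B x. B \<in> A \<Longrightarrow> u B x = \<alpha> B" using u unfolding Cp_def by auto
    have pe: "(\<lambda>B. B \<in> A \<and> u B x = Max ((\<lambda>B. u B x) ` A)) = (\<lambda>B. B \<in> T0)" for x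
    proof -
      have "(\<lambda>B. u B x) ` A = \<alpha> ` A" using uA by auto
      then show ?thesis unfolding T0_def C0_def using uA by (auto simp: fun_eq_iff)
    qed
    show ?thesis
      by (rule exI[of _ "{}"], rule exI[of _ "arg_min rk (\<lambda>B. B \<in> T0)"]) (auto simp: pe upper_def)
  next
    case False
    define C1 where "C1 = Max (\<beta> ` Cp)"
    define T1 where "T1 = {B\<in>Cp. \<beta> B = C1}"
    have finCp: "finite Cp" unfolding Cp_def using fin by auto
    have bC1: "\<And>B. B \<in> Cp \<Longrightarrow> \<beta> B \<le> C1" unfolding C1_def using finCp by auto
    have T1ne: "T1 \<noteq> {}"
    proof -
      have "Max (\<beta> ` Cp) \<in> \<beta> ` Cp" using finCp False by (intro Max_in) auto
      then obtain B where "B \<in> Cp" "\<beta> B = C1" unfolding C1_def by auto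
      then show ?thesis unfolding T1_def by auto
    qed
    define xs where "xs = C0 - C1"
    have uMax: "Max ((\<lambda>B. u B x) ` A) = max C0 (C1 + x)" for x
    proof (rule Max_eqI)
      show "finite ((\<lambda>B. u B x) ` A)" using fin by auto
      show "y \<le> max C0 (C1 + x)" if yin: "y \<in> (\<lambda>B. u B x) ` A" for y
      proof -
        obtain B where B: "B \<in> A" "y = u B x" using yin by auto
        show ?thesis using u[OF B(1), of x] aC0[OF B(1)] bC1[of B] B unfolding Cp_def by (auto split: if_splits)
      qed
      show "max C0 (C1 + x) \<in> (\<lambda>B. u B x) ` A"
      proof (cases "C1 + x \<le> C0")
        case True
        obtain B where B: "B \<in> T0" using T0ne by auto
        have "u B x = C0" using u[of B x] B True bC1[of B] unfolding T0_def Cp_def by auto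
        then show ?thesis using B True unfolding T0_def by (auto intro!: image_eqI[of _ _ B])
      next
        case False
        obtain B where B: "B \<in> T1" using T1ne by auto
        have "u B x = C1 + x" using u[of B x] B False aC0[of B] unfolding T1_def Cp_def by auto
        then show ?thesis using B False unfolding T1_def Cp_def by (auto intro!: image_eqI[of _ _ B])
      qed
    qed
    have pe0: "(\<lambda>B. B \<in> A \<and> u B x = Max ((\<lambda>B. u B x) ` A)) = (\<lambda>B. B \<in> T0)" if "x < xs" for x
    proof -
      have "B \<in> A \<and> u B x = max C0 (C1 + x) \<longleftrightarrow> B \<in> T0" for B
        using u[of B x] aC0[of B] bC1[of B] that unfolding T0_def Cp_def xs_def by (cases "cap B") (auto simp: max_def split: if_splits)
      then show ?thesis unfolding uMax by auto
    qed
    have pe1: "(\<lambda>B. B \<in> A \<and> u B x = Max ((\<lambda>B. u B x) ` A)) = (\<lambda>B. B \<in> T1)" if "x > xs" for x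
    proof -
      have "B \<in> A \<and> u B x = max C0 (C1 + x) \<longleftrightarrow> B \<in> T1" for B
        using u[of B x] aC0[of B] bC1[of B] that unfolding T1_def Cp_def xs_def by (cases "cap B") (auto simp: max_def split: if_splits)
      then show ?thesis unfolding uMax by auto
    qed
    have pes: "(\<lambda>B. B \<in> A \<and> u B xs = Max ((\<lambda>B. u B xs) ` A)) = (\<lambda>B. B \<in> T0 \<union> T1)"
    proof -
      have "B \<in> A \<and> u B xs = max C0 (C1 + xs) \<longleftrightarrow> B \<in> T0 \<union> T1" for B
        using u[of B xs] aC0[of B] bC1[of B] unfolding T0_def T1_def Cp_def xs_def by (cases "cap B") (auto simp: max_def split: if_splits)
      then show ?thesis unfolding uMax by auto
    qed
    define b0 where "b0 = arg_min rk (\<lambda>B. B \<in> T0)"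
    define b1 where "b1 = arg_min rk (\<lambda>B. B \<in> T1)"
    define bs where "bs = arg_min rk (\<lambda>B. B \<in> T0 \<union> T1)"
    have m0: "b0 \<in> T0" "\<forall>c\<in>T0. rk b0 \<le> rk c" using am_mem[OF T0ne, of rk] unfolding b0_def by auto
    have m1: "b1 \<in> T1" "\<forall>c\<in>T1. rk b1 \<le> rk c" using am_mem[OF T1ne, of rk] unfolding b1_def by auto
    have ms: "bs \<in> T0 \<union> T1" "\<forall>c\<in>T0 \<union> T1. rk bs \<le> rk c" using am_mem[of "T0 \<union> T1" rk] T0ne unfolding bs_def by auto
    have sub: "T0 \<subseteq> A" "T1 \<subseteq> A" unfolding T0_def T1_def Cp_def by auto
    have bs01: "bs = b0 \<or> bs = b1"
    proof (cases "bs \<in> T0")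
      case True
      then have "arg_min rk (\<lambda>B. B \<in> T0) = bs" using am_unique[OF inj sub(1) True] ms(2) by auto
      then show ?thesis unfolding b0_def by auto
    next
      case False
      then have T: "bs \<in> T1" using ms(1) by auto
      then have "arg_min rk (\<lambda>B. B \<in> T1) = bs" using am_unique[OF inj sub(2) T] ms(2) by auto
      then show ?thesis unfolding b1_def by auto
    qed
    define W where "W = (if bs = b1 then {xs..} else {xs<..})"
    have upW: "upper W" unfolding W_def upper_def by auto
    have "\<forall>x. arg_min rk (\<lambda>B. B \<in> A \<and> u B x = Max ((\<lambda>B. u B x) ` A)) = (if x \<in> W then b1 else b0)"
    proof
      fix x :: real
      consider "x < xs" | "x = xs" | "x > xs" by linarith
      then show "arg_min rk (\<lambda>B. B \<in> A \<and> u B x = Max ((\<lambda>B. u B x) ` A)) = (if x \<in> W then b1 else b0)"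
      proof cases
        case 1 then show ?thesis unfolding pe0[OF 1] W_def b0_def by auto
      next
        case 3 then show ?thesis unfolding pe1[OF 3] W_def b1_def by auto
      next
        case 2
        have "arg_min rk (\<lambda>B. B \<in> A \<and> u B x = Max ((\<lambda>B. u B x) ` A)) = bs"
          unfolding 2 pes bs_def by simp
        then show ?thesis using bs01 unfolding W_def 2 by auto
      qed
    qed
    then show ?thesis using upW by blast
  qed
qed

lemma val_split:
  fixes g :: "nat \<Rightarrow> real"
  assumes finB: "finite B" and e: "{} \<in> I i"
  shows "val I i (g(j0:=x)) B =
    (if {R. R \<subseteq> B \<and> R \<in> I i \<and> j0 \<in> R} = {} then Max (sum g ` {R. R \<subseteq> B \<and> R \<in> I i \<and> j0 \<notin> R})
     else max (Max (sum g ` {R. R \<subseteq> B \<and> R \<in> I i \<and> j0 \<notin> R}))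
              (Max ((\<lambda>R. sum g (R - {j0})) ` {R. R \<subseteq> B \<and> R \<in> I i \<and> j0 \<in> R}) + x))"
proof -
  define Rs0 where "Rs0 = {R. R \<subseteq> B \<and> R \<in> I i \<and> j0 \<notin> R}"
  define Rs1 where "Rs1 = {R. R \<subseteq> B \<and> R \<in> I i \<and> j0 \<in> R}"
  have un: "{R. R \<subseteq> B \<and> R \<in> I i} = Rs0 \<union> Rs1" unfolding Rs0_def Rs1_def by auto
  have f0: "finite Rs0"
  proof -
    have "Rs0 \<subseteq> Pow B" unfolding Rs0_def by auto
    then show ?thesis using finB by (auto intro: finite_subset)
  qed
  have f1: "finite Rs1"
  proof -
    have "Rs1 \<subseteq> Pow B" unfolding Rs1_def by auto
    then show ?thesis using finB by (auto intro: finite_subset)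
  qed
  have ne0: "Rs0 \<noteq> {}" using e unfolding Rs0_def by auto
  have i0: "(\<lambda>R. sum (g(j0:=x)) R) ` Rs0 = sum g ` Rs0"
    by (rule image_cong[OF refl], rule sum.cong) (auto simp: Rs0_def)
  have i1: "(\<lambda>R. sum (g(j0:=x)) R) ` Rs1 = (\<lambda>R. sum g (R - {j0}) + x) ` Rs1"
  proof (rule image_cong[OF refl])
    fix R assume R: "R \<in> Rs1"
    then have fR: "finite R" and jR: "j0 \<in> R" using finB unfolding Rs1_def by (auto intro: finite_subset)
    have "sum (g(j0:=x)) R = (g(j0:=x)) j0 + sum (g(j0:=x)) (R - {j0})"
      by (rule sum.remove[OF fR jR])
    also have "sum (g(j0:=x)) (R - {j0}) = sum g (R - {j0})" by (rule sum.cong) auto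
    finally show "sum (g(j0:=x)) R = sum g (R - {j0}) + x" by simp
  qed
  show ?thesis
    unfolding Rs0_def[symmetric] Rs1_def[symmetric]
  proof (cases "Rs1 = {}")
    case True
    have "val I i (g(j0:=x)) B = Max ((\<lambda>R. sum (g(j0:=x)) R) ` Rs0)"
      unfolding val_def un True by simp
    then show "val I i (g(j0:=x)) B = (if Rs1 = {} then Max (sum g ` Rs0)
       else max (Max (sum g ` Rs0)) (Max ((\<lambda>R. sum g (R - {j0})) ` Rs1) + x))"
      using True i0 by simp
  next
    case False
    have "val I i (g(j0:=x)) B = Max ((\<lambda>R. sum (g(j0:=x)) R) ` Rs0 \<union> (\<lambda>R. sum (g(j0:=x)) R) ` Rs1)"
      unfolding val_def un image_Un by simp
    also have "\<dots> = max (Max ((\<lambda>R. sum (g(j0:=x)) R) ` Rs0)) (Max ((\<lambda>R. sum (g(j0:=x)) R) ` Rs1))"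
      by (rule Max_Un) (use f0 f1 ne0 False in auto)
    also have "Max ((\<lambda>R. sum (g(j0:=x)) R) ` Rs1) = Max ((\<lambda>R. sum g (R - {j0})) ` Rs1) + x"
      unfolding i1 by (rule Max_add_commute[OF f1 False])
    finally show "val I i (g(j0:=x)) B = (if Rs1 = {} then Max (sum g ` Rs0)
       else max (Max (sum g ` Rs0)) (Max ((\<lambda>R. sum g (R - {j0})) ` Rs1) + x))"
      using False i0 by (simp only: if_False)
  qed
qed

lemma util_form:
  fixes g :: "nat \<Rightarrow> real"
  assumes finB: "finite B" and e: "{} \<in> I i"
  shows "util I pr i (g(j0:=x)) B =
    (if {R. R \<subseteq> B \<and> R \<in> I i \<and> j0 \<in> R} = {} then Max (sum g ` {R. R \<subseteq> B \<and> R \<in> I i \<and> j0 \<notin> R}) - (\<Sum>j\<in>B. pr i j)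
     else max (Max (sum g ` {R. R \<subseteq> B \<and> R \<in> I i \<and> j0 \<notin> R}) - (\<Sum>j\<in>B. pr i j))
              ((Max ((\<lambda>R. sum g (R - {j0})) ` {R. R \<subseteq> B \<and> R \<in> I i \<and> j0 \<in> R}) - (\<Sum>j\<in>B. pr i j)) + x))"
  unfolding util_def val_split[where I=I and i=i, OF finB e] by (auto simp: max_def)

lemma util_mono:
  fixes g :: "nat \<Rightarrow> real"
  assumes finB: "finite B" and e: "{} \<in> I i" and xy: "x \<le> y"
  shows "util I pr i (g(j0:=x)) B \<le> util I pr i (g(j0:=y)) B"
  unfolding util_form[where I=I and i=i, OF finB e] using xy by (auto simp: max_def)

lemma Umax_mono:
  fixes g :: "nat \<Rightarrow> real"
  assumes finS: "finite S" and e: "{} \<in> I i" and xy: "x \<le> y"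
  shows "Max (util I pr i (g(j0:=x)) ` Pow S) \<le> Max (util I pr i (g(j0:=y)) ` Pow S)"
proof (rule Max.boundedI)
  show "finite (util I pr i (g(j0:=x)) ` Pow S)" using finS by auto
  show "util I pr i (g(j0:=x)) ` Pow S \<noteq> {}" by auto
  fix a assume "a \<in> util I pr i (g(j0:=x)) ` Pow S"
  then obtain B where B: "B \<subseteq> S" "a = util I pr i (g(j0:=x)) B" by auto
  have fB: "finite B" using finS B(1) by (rule finite_subset[rotated])
  have "a \<le> util I pr i (g(j0:=y)) B" using util_mono[where I=I and i=i, OF fB e xy] B by simp
  also have "\<dots> \<le> Max (util I pr i (g(j0:=y)) ` Pow S)" using finS B(1) by (intro Max_ge) auto
  finally show "a \<le> Max (util I pr i (g(j0:=y)) ` Pow S)" .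
qed

lemma fav_prop:
  assumes finS: "finite S"
  shows "fav I pr rk i ti S \<subseteq> S \<and> util I pr i ti (fav I pr rk i ti S) = Max (util I pr i ti ` Pow S)"
proof -
  have "Max (util I pr i ti ` Pow S) \<in> util I pr i ti ` Pow S" using finS by (intro Max_in) auto
  then obtain B where B: "B \<subseteq> S" "util I pr i ti B = Max (util I pr i ti ` Pow S)" by auto
  show ?thesis unfolding fav_def
    by (rule arg_min_natI[of "\<lambda>B. B \<subseteq> S \<and> util I pr i ti B = Max (util I pr i ti ` Pow S)", OF conjI[OF B]])
qed

lemma fav_switch:
  fixes g :: "nat \<Rightarrow> real"
  assumes finS: "finite S" and e: "{} \<in> I i" and inj: "inj_on (rk i) (Pow S)"
  shows "\<exists>W b0 b1. upper W \<and> (\<forall>x. fav I pr rk i (g(j0:=x)) S = (if x \<in> W then b1 else b0))"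
proof -
  define u where "u B x = util I pr i (g(j0:=x)) B" for B x
  define cap where "cap B = ({R. R \<subseteq> B \<and> R \<in> I i \<and> j0 \<in> R} \<noteq> {})" for B
  define \<alpha> where "\<alpha> B = Max (sum g ` {R. R \<subseteq> B \<and> R \<in> I i \<and> j0 \<notin> R}) - (\<Sum>j\<in>B. pr i j)" for B
  define \<beta> where "\<beta> B = Max ((\<lambda>R. sum g (R - {j0})) ` {R. R \<subseteq> B \<and> R \<in> I i \<and> j0 \<in> R}) - (\<Sum>j\<in>B. pr i j)" for B
  have uf: "u B x = (if cap B then max (\<alpha> B) (\<beta> B + x) else \<alpha> B)" if "B \<in> Pow S" for B x
  proof -
    have fB: "finite B" using that finS by (auto intro: finite_subset)
    show ?thesis unfolding u_def cap_def \<alpha>_def \<beta>_def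
      by (subst util_form[where I=I and i=i and g=g and pr=pr, OF fB e]) auto
  qed
  obtain W b0 b1 where W: "upper W"
    and am: "\<forall>x. arg_min (rk i) (\<lambda>B. B \<in> Pow S \<and> u B x = Max ((\<lambda>B. u B x) ` Pow S)) = (if x \<in> W then b1 else b0)"
    using one_switch[of "Pow S" "rk i" u cap \<alpha> \<beta>, OF _ _ inj uf] finS by blast
  have "fav I pr rk i (g(j0:=x)) S = arg_min (rk i) (\<lambda>B. B \<in> Pow S \<and> u B x = Max ((\<lambda>B. u B x) ` Pow S))" for x
    unfolding fav_def u_def by (simp add: Pow_def)
  then show ?thesis using W am by auto
qed

definition stp :: "(nat \<Rightarrow> nat set set) \<Rightarrow> (nat \<Rightarrow> nat \<Rightarrow> real) \<Rightarrow> (nat \<Rightarrow> nat set \<Rightarrow> real)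
    \<Rightarrow> (nat \<Rightarrow> nat set \<Rightarrow> nat) \<Rightarrow> nat \<Rightarrow> (nat \<Rightarrow> real) \<Rightarrow> nat set \<times> real \<Rightarrow> nat set \<times> real" where
  "stp I pr \<delta> rk i ti st =
     (let (S, r) = st;
          B = fav I pr rk i ti S
      in if util I pr i ti B \<ge> \<delta> i S
         then (S - B, r + \<delta> i S + (\<Sum>j\<in>B. pr i j))
         else (S, r))"

lemma run_Suc: "spem_run m I pr \<delta> rk t (Suc i) = stp I pr \<delta> rk i (\<lambda>j. t (i, j)) (spem_run m I pr \<delta> rk t i)"
  by (simp add: stp_def case_prod_unfold Let_def)

lemma stp_form:
  fixes g :: "nat \<Rightarrow> real"
  assumes finS: "finite S" and e: "{} \<in> I i" and inj: "inj_on (rk i) (Pow S)"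
  shows "\<exists>U1 U2 s0 s1 s2. upper U1 \<and> upper U2 \<and> U2 \<subseteq> U1 \<and>
     (\<forall>x. stp I pr \<delta> rk i (g(jj:=x)) (S, r) = (if x \<in> U2 then s2 else if x \<in> U1 then s1 else s0))"
proof -
  obtain W b0 b1 where W: "upper W" and fv: "\<forall>x. fav I pr rk i (g(jj:=x)) S = (if x \<in> W then b1 else b0)"
    using fav_switch[where I=I and i=i and rk=rk and g=g and pr=pr, OF finS e inj] by blast
  define E where "E = {x. \<delta> i S \<le> Max (util I pr i (g(jj:=x)) ` Pow S)}"
  have E: "upper E" unfolding upper_def E_def
  proof (intro ballI allI impI)
    fix x y :: real assume x: "x \<in> {x. \<delta> i S \<le> Max (util I pr i (g(jj:=x)) ` Pow S)}" and xy: "x \<le> y"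
    have "Max (util I pr i (g(jj:=x)) ` Pow S) \<le> Max (util I pr i (g(jj:=y)) ` Pow S)"
      by (rule Umax_mono[where I=I and i=i, OF finS e xy])
    then show "y \<in> {x. \<delta> i S \<le> Max (util I pr i (g(jj:=x)) ` Pow S)}" using x by simp
  qed
  have ut: "util I pr i (g(jj:=x)) (fav I pr rk i (g(jj:=x)) S) = Max (util I pr i (g(jj:=x)) ` Pow S)" for x
    using fav_prop[OF finS] by blast
  define o' where "o' B = (S - B, r + \<delta> i S + (\<Sum>j\<in>B. pr i j))" for B
  have "\<forall>x. stp I pr \<delta> rk i (g(jj:=x)) (S, r) = (if x \<in> E \<inter> W then o' b1 else if x \<in> E then o' b0 else (S, r))"
  proof
    fix x
    show "stp I pr \<delta> rk i (g(jj:=x)) (S, r) = (if x \<in> E \<inter> W then o' b1 else if x \<in> E then o' b0 else (S, r))"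
    proof -
      have "stp I pr \<delta> rk i (g(jj:=x)) (S, r) = (if x \<in> E then o' (fav I pr rk i (g(jj:=x)) S) else (S, r))"
        unfolding stp_def o'_def E_def Let_def using ut[of x] by simp
      then show ?thesis using fv by (cases "x \<in> W") auto
    qed
  qed
  moreover have "upper (E \<inter> W)" using E W by (rule upper_Int)
  ultimately show ?thesis using E by blast
qed

lemma tsf_from_state:
  assumes U1: "upper U1" and U2: "upper U2" and U12: "U2 \<subseteq> U1"
    and phi: "\<forall>x. \<phi> x = (if x \<in> U2 then s2 else if x \<in> U1 then s1 else s0)"
    and dep: "\<forall>x y. \<phi> x = \<phi> y \<longrightarrow> f x = f y"
    and bnd: "\<forall>x\<in>{0..H}. f x \<in> {0..C}" and C: "0 \<le> C"
  shows "tsf H C f"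
proof -
  define pick where "pick V = (if \<exists>x. x \<in> {0..H} \<and> x \<in> V then f (SOME x. x \<in> {0..H} \<and> x \<in> V) else 0)" for V
  have pickb: "pick V \<in> {0..C}" for V
  proof (cases "\<exists>x. x \<in> {0..H} \<and> x \<in> V")
    case True
    have s: "(SOME x. x \<in> {0..H} \<and> x \<in> V) \<in> {0..H}" using someI_ex[OF True] by blast
    have "pick V = f (SOME x. x \<in> {0..H} \<and> x \<in> V)" unfolding pick_def using True by (simp only: if_True)
    then show ?thesis using bnd s by simp
  next
    case False
    then have "pick V = 0" unfolding pick_def by (simp only: if_False)
    then show ?thesis using C by simp
  qed
  have pickv: "f x = pick V" if "x \<in> {0..H}" "x \<in> V" "\<forall>y\<in>V. \<forall>z\<in>V. \<phi> y = \<phi> z" for x V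
  proof -
    have ex: "\<exists>x. x \<in> {0..H} \<and> x \<in> V" using that by auto
    define y where "y = (SOME x. x \<in> {0..H} \<and> x \<in> V)"
    have "y \<in> {0..H} \<and> y \<in> V" unfolding y_def by (rule someI_ex[OF ex])
    then have "\<phi> x = \<phi> y" using that by blast
    then have "f x = f y" using dep by blast
    moreover have "pick V = f y" unfolding pick_def y_def using ex by (simp only: if_True)
    ultimately show ?thesis by simp
  qed
  have c2: "\<forall>y\<in>U2. \<forall>z\<in>U2. \<phi> y = \<phi> z"
  proof (intro ballI)
    fix y z assume "y \<in> U2" "z \<in> U2"
    then show "\<phi> y = \<phi> z" using phi[rule_format, of y] phi[rule_format, of z] by simp
  qed
  have c1: "\<forall>y\<in>U1 - U2. \<forall>z\<in>U1 - U2. \<phi> y = \<phi> z"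
  proof (intro ballI)
    fix y z assume "y \<in> U1 - U2" "z \<in> U1 - U2"
    then show "\<phi> y = \<phi> z" using phi[rule_format, of y] phi[rule_format, of z] by simp
  qed
  have c0: "\<forall>y\<in>- U1. \<forall>z\<in>- U1. \<phi> y = \<phi> z"
  proof (intro ballI)
    fix y z assume "y \<in> - U1" "z \<in> - U1"
    then show "\<phi> y = \<phi> z" using phi[rule_format, of y] phi[rule_format, of z] U12 by auto
  qed
  have "\<forall>x\<in>{0..H}. f x = (if x \<in> U2 then pick U2 else if x \<in> U1 then pick (U1 - U2) else pick (- U1))"
  proof
    fix x :: real assume x: "x \<in> {0..H}"
    show "f x = (if x \<in> U2 then pick U2 else if x \<in> U1 then pick (U1 - U2) else pick (- U1))"
    proof (cases "x \<in> U2")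
      case True then show ?thesis using pickv[OF x True c2] by simp
    next
      case n2: False
      show ?thesis
      proof (cases "x \<in> U1")
        case True
        then have "x \<in> U1 - U2" using n2 by simp
        then show ?thesis using pickv[OF x _ c1] n2 True by simp
      next
        case False
        then have "x \<in> - U1" by simp
        then show ?thesis using pickv[OF x _ c0] n2 False by simp
      qed
    qed
  qed
  then show ?thesis unfolding tsf_def using U1 U2 U12 pickb by blast
qed

lemma run_dep_prefix:
  "(\<forall>i<l. \<forall>j. t (i,j) = t' (i,j)) \<Longrightarrow> spem_run m I pr \<delta> rk t l = spem_run m I pr \<delta> rk t' l"
proof (induction l)
  case 0 then show ?case by simp
next
  case (Suc l)
  have r: "(\<lambda>j. t (l, j)) = (\<lambda>j. t' (l, j))" using Suc.prems by auto
  show ?case unfolding run_Suc r using Suc by simp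
qed

lemma run_dep_suffix:
  assumes e: "spem_run m I pr \<delta> rk t l0 = spem_run m I pr \<delta> rk t' l0"
    and rows: "\<forall>i\<ge>l0. \<forall>j. t (i,j) = t' (i,j)" and l: "l0 \<le> l"
  shows "spem_run m I pr \<delta> rk t l = spem_run m I pr \<delta> rk t' l"
  using l
proof (induction l rule: dec_induct)
  case base then show ?case using e .
next
  case (step l)
  have r: "(\<lambda>j. t (l, j)) = (\<lambda>j. t' (l, j))" using rows step.hyps by auto
  show ?case unfolding run_Suc r using step.IH by simp
qed

lemma stp_fst_sub: "fst (stp I pr \<delta> rk i ti (S, r)) \<subseteq> S"
  unfolding stp_def Let_def by auto

lemma run_fst_sub: "fst (spem_run m I pr \<delta> rk t l) \<subseteq> {..<m}"
proof (induction l)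
  case 0 then show ?case by simp
next
  case (Suc l)
  obtain S r where sr: "spem_run m I pr \<delta> rk t l = (S, r)" by (cases "spem_run m I pr \<delta> rk t l")
  show ?case unfolding run_Suc sr using stp_fst_sub[of I pr \<delta> rk l "\<lambda>j. t (l, j)" S r] Suc sr by auto
qed

lemma val_le:
  assumes finB: "finite B" and e: "{} \<in> I i" and nn: "\<forall>j\<in>B. ti j \<in> {0..H}"
  shows "val I i ti B \<le> H * real (card B)"
  unfolding val_def
proof (rule Max.boundedI)
  show "finite ((\<lambda>R. \<Sum>j\<in>R. ti j) ` {R. R \<subseteq> B \<and> R \<in> I i})"
  proof -
    have "{R. R \<subseteq> B \<and> R \<in> I i} \<subseteq> Pow B" by auto
    then show ?thesis using finB by (auto intro: finite_subset)
  qed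
  show "(\<lambda>R. \<Sum>j\<in>R. ti j) ` {R. R \<subseteq> B \<and> R \<in> I i} \<noteq> {}" using e by auto
  fix a assume "a \<in> (\<lambda>R. \<Sum>j\<in>R. ti j) ` {R. R \<subseteq> B \<and> R \<in> I i}"
  then obtain R where R: "R \<subseteq> B" "a = (\<Sum>j\<in>R. ti j)" by auto
  have "(\<Sum>j\<in>R. ti j) \<le> (\<Sum>j\<in>B. ti j)" by (rule sum_mono2[OF finB R(1)]) (use nn in auto)
  also have "\<dots> \<le> real (card B) * H" by (rule sum_bounded_above) (use nn in auto)
  finally show "a \<le> H * real (card B)" using R by (simp add: mult.commute)
qed

lemma run_bound:
  assumes prices: "\<forall>i<n. \<forall>j<m. pr i j \<ge> 0"
    and fees: "\<forall>i<n. \<forall>S. S \<subseteq> {..<m} \<longrightarrow> \<delta> i S \<ge> 0"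
    and e: "\<forall>i<n. {} \<in> I i"
    and bx: "\<forall>i<n. \<forall>j<m. t (i,j) \<in> {0..H}"
    and l: "l \<le> n"
  shows "0 \<le> snd (spem_run m I pr \<delta> rk t l) \<and> snd (spem_run m I pr \<delta> rk t l) \<le> H * (real m - real (card (fst (spem_run m I pr \<delta> rk t l))))"
  using l
proof (induction l)
  case 0 then show ?case by simp
next
  case (Suc l)
  then have ln: "l < n" by simp
  obtain S r where sr: "spem_run m I pr \<delta> rk t l = (S, r)" by (cases "spem_run m I pr \<delta> rk t l")
  have Sm: "S \<subseteq> {..<m}" using run_fst_sub[of m I pr \<delta> rk t l] sr by simp
  have finS: "finite S" using Sm by (auto intro: finite_subset)
  have cS: "card S \<le> m" using card_mono[OF _ Sm] by simp
  have IH: "0 \<le> r" "r \<le> H * (real m - real (card S))" using Suc ln sr by auto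
  define ti where "ti = (\<lambda>j. t (l, j))"
  define B where "B = fav I pr rk l ti S"
  have BS: "B \<subseteq> S" using fav_prop[OF finS] unfolding B_def by blast
  have finB: "finite B" using BS finS by (auto intro: finite_subset)
  have st: "spem_run m I pr \<delta> rk t (Suc l) =
      (if util I pr l ti B \<ge> \<delta> l S then (S - B, r + \<delta> l S + (\<Sum>j\<in>B. pr l j)) else (S, r))"
    unfolding run_Suc sr stp_def Let_def B_def ti_def by simp
  show ?case
  proof (cases "util I pr l ti B \<ge> \<delta> l S")
    case False then show ?thesis using st IH by simp
  next
    case True
    have d0: "\<delta> l S \<ge> 0" using fees ln Sm by auto
    have p0: "(\<Sum>j\<in>B. pr l j) \<ge> 0" by (rule sum_nonneg) (use prices ln BS Sm in auto)
    have vB: "val I l ti B \<le> H * real (card B)"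
      by (rule val_le[OF finB]) (use e ln bx BS Sm ti_def in auto)
    have pay: "\<delta> l S + (\<Sum>j\<in>B. pr l j) \<le> H * real (card B)"
      using True vB unfolding util_def by simp
    have cB: "real (card (S - B)) = real (card S) - real (card B)"
      using card_Diff_subset[OF finB BS] card_mono[OF finS BS] by simp
    have hc: "H * real (card (S - B)) = H * real (card S) - H * real (card B)"
      unfolding cB by (simp add: right_diff_distrib)
    have fs: "fst (spem_run m I pr \<delta> rk t (Suc l)) = S - B"
      "snd (spem_run m I pr \<delta> rk t (Suc l)) = r + \<delta> l S + (\<Sum>j\<in>B. pr l j)"
      using st True by (simp_all only: if_True fst_conv snd_conv)
    show ?thesis unfolding fs using IH d0 p0 pay hc by (simp add: algebra_simps)
  qed
qed

lemma spem_tsf: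
  assumes cadd: "\<forall>i<n. constrained_family m (I i)"
    and prices: "\<forall>i<n. \<forall>j<m. pr i j \<ge> 0"
    and fees: "\<forall>i<n. \<forall>S. S \<subseteq> {..<m} \<longrightarrow> \<delta> i S \<ge> 0"
    and ties: "\<forall>i<n. inj_on (rk i) (Pow {..<m})"
    and H: "0 \<le> H" and k: "k \<in> {..<n} \<times> {..<m}" and bt: "box ({..<n} \<times> {..<m}) H t"
  shows "tsf H (real m * H) (\<lambda>x. spem_rev n m I pr \<delta> rk (t(k:=x)))"
proof -
  obtain i0 j0 where k': "k = (i0, j0)" and i0: "i0 < n" and j0: "j0 < m" using k by auto
  have e: "\<forall>i<n. {} \<in> I i" using cadd unfolding constrained_family_def by auto
  obtain S r where sr: "spem_run m I pr \<delta> rk t i0 = (S, r)" by (cases "spem_run m I pr \<delta> rk t i0")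
  have Sm: "S \<subseteq> {..<m}" using run_fst_sub[of m I pr \<delta> rk t i0] sr by simp
  have finS: "finite S" using Sm by (auto intro: finite_subset)
  have inj: "inj_on (rk i0) (Pow S)"
    by (rule inj_on_subset[of _ "Pow {..<m}"]) (use ties i0 Sm in auto)
  have e0: "{} \<in> I i0" using e i0 by blast
  define g where "g = (\<lambda>j. t (i0, j))"
  obtain U1 U2 s0 s1 s2 where U: "upper U1" "upper U2" "U2 \<subseteq> U1"
    and sf: "\<forall>x. stp I pr \<delta> rk i0 (g(j0:=x)) (S, r) = (if x \<in> U2 then s2 else if x \<in> U1 then s1 else s0)"
    using stp_form[where I=I and i=i0 and rk=rk and g=g and pr=pr and \<delta>=\<delta> and jj=j0 and r=r, OF finS e0 inj] by blast
  define \<phi> where "\<phi> x = spem_run m I pr \<delta> rk (t(k:=x)) (Suc i0)" for x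
  have phi: "\<forall>x. \<phi> x = (if x \<in> U2 then s2 else if x \<in> U1 then s1 else s0)"
  proof
    fix x
    have r: "(\<lambda>j. (t(k:=x)) (i0, j)) = g(j0:=x)" unfolding g_def k' by auto
    have p: "spem_run m I pr \<delta> rk (t(k:=x)) i0 = spem_run m I pr \<delta> rk t i0"
      by (rule run_dep_prefix) (auto simp: k')
    show "\<phi> x = (if x \<in> U2 then s2 else if x \<in> U1 then s1 else s0)"
      unfolding \<phi>_def run_Suc r p sr by (rule sf[rule_format])
  qed
  have dep: "\<forall>x y. \<phi> x = \<phi> y \<longrightarrow> spem_rev n m I pr \<delta> rk (t(k:=x)) = spem_rev n m I pr \<delta> rk (t(k:=y))"
  proof (intro allI impI)
    fix x y assume "\<phi> x = \<phi> y"
    then have "spem_run m I pr \<delta> rk (t(k:=x)) n = spem_run m I pr \<delta> rk (t(k:=y)) n"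
      unfolding \<phi>_def by (rule run_dep_suffix) (use i0 in \<open>auto simp: k'\<close>)
    then show "spem_rev n m I pr \<delta> rk (t(k:=x)) = spem_rev n m I pr \<delta> rk (t(k:=y))"
      unfolding spem_rev_def by simp
  qed
  have bnd: "\<forall>x\<in>{0..H}. spem_rev n m I pr \<delta> rk (t(k:=x)) \<in> {0..real m * H}"
  proof
    fix x :: real assume x: "x \<in> {0..H}"
    have bx: "\<forall>i<n. \<forall>j<m. (t(k:=x)) (i,j) \<in> {0..H}" using bt x unfolding box_def by auto
    have rb: "0 \<le> snd (spem_run m I pr \<delta> rk (t(k:=x)) n) \<and> snd (spem_run m I pr \<delta> rk (t(k:=x)) n) \<le> H * (real m - real (card (fst (spem_run m I pr \<delta> rk (t(k:=x)) n))))"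
      by (rule run_bound[OF prices fees e bx]) simp
    have "real m - real (card (fst (spem_run m I pr \<delta> rk (t(k:=x)) n))) \<le> real m" by simp
    then have "H * (real m - real (card (fst (spem_run m I pr \<delta> rk (t(k:=x)) n)))) \<le> H * real m"
      using H by (rule mult_left_mono)
    then show "spem_rev n m I pr \<delta> rk (t(k:=x)) \<in> {0..real m * H}"
      using rb unfolding spem_rev_def by (simp add: mult.commute)
  qed
  show ?thesis
    by (rule tsf_from_state[OF U phi dep bnd]) (use H in simp)
qed

context
  fixes n m :: nat and M :: "nat \<times> nat \<Rightarrow> real measure"
  assumes sM: "\<And>k. k \<in> {..<n} \<times> {..<m} \<Longrightarrow> sets (M k) = sets borel"
begin

abbreviation "PP \<equiv> PiM ({..<n} \<times> {..<m}) M"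

lemma comp_m: "i < n \<Longrightarrow> j < m \<Longrightarrow> (\<lambda>t. t (i,j)) \<in> borel_measurable PP"
proof -
  assume ij: "i < n" "j < m"
  have "(\<lambda>t. t (i,j)) \<in> measurable PP (M (i,j))"
    by (rule measurable_component_singleton) (use ij in auto)
  then show ?thesis using measurable_cong_sets[OF refl sM[of "(i,j)"], where M=PP] ij by simp
qed

lemma sum_m: "i < n \<Longrightarrow> R \<subseteq> {..<m} \<Longrightarrow> (\<lambda>t. \<Sum>j\<in>R. t (i,j)) \<in> borel_measurable PP"
  by (rule borel_measurable_sum) (auto intro: comp_m)

lemma val_m: "i < n \<Longrightarrow> B \<subseteq> {..<m} \<Longrightarrow> (\<lambda>t. val I i (\<lambda>j. t (i,j)) B) \<in> borel_measurable PP"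
  unfolding val_def
proof (rule borel_measurable_Max)
  assume "i < n" "B \<subseteq> {..<m}"
  show "finite {R. R \<subseteq> B \<and> R \<in> I i}"
  proof -
    have "{R. R \<subseteq> B \<and> R \<in> I i} \<subseteq> Pow B" by auto
    moreover have "finite B" using \<open>B \<subseteq> {..<m}\<close> by (auto intro: finite_subset)
    ultimately show ?thesis by (auto intro: finite_subset)
  qed
  fix R assume "R \<in> {R. R \<subseteq> B \<and> R \<in> I i}"
  then show "(\<lambda>t. \<Sum>j\<in>R. t (i,j)) \<in> borel_measurable PP"
    using \<open>i < n\<close> \<open>B \<subseteq> {..<m}\<close> by (intro sum_m) auto
qed

lemma util_m: "i < n \<Longrightarrow> B \<subseteq> {..<m} \<Longrightarrow> (\<lambda>t. util I pr i (\<lambda>j. t (i,j)) B) \<in> borel_measurable PP"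
  unfolding util_def by (intro borel_measurable_diff val_m) auto

lemma Umax_m: "i < n \<Longrightarrow> S \<subseteq> {..<m} \<Longrightarrow> (\<lambda>t. Max ((\<lambda>B. util I pr i (\<lambda>j. t (i,j)) B) ` Pow S)) \<in> borel_measurable PP"
  by (rule borel_measurable_Max) (auto intro: util_m finite_subset)

lemma fav_char:
  assumes finS: "finite S" and inj: "inj_on (rk i) (Pow S)" and B: "B \<subseteq> S"
  shows "fav I pr rk i ti S = B \<longleftrightarrow> util I pr i ti B = Max (util I pr i ti ` Pow S) \<and>
     (\<forall>B'\<in>Pow S. util I pr i ti B' = Max (util I pr i ti ` Pow S) \<longrightarrow> rk i B \<le> rk i B')"
proof -
  define T where "T = {B\<in>Pow S. util I pr i ti B = Max (util I pr i ti ` Pow S)}"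
  have fe: "fav I pr rk i ti S = arg_min (rk i) (\<lambda>B. B \<in> T)"
    unfolding fav_def T_def by (simp add: Pow_def)
  have Tne: "T \<noteq> {}" using fav_prop[OF finS, of I pr rk i ti] unfolding T_def by auto
  show ?thesis
  proof
    assume "fav I pr rk i ti S = B"
    then show "util I pr i ti B = Max (util I pr i ti ` Pow S) \<and>
     (\<forall>B'\<in>Pow S. util I pr i ti B' = Max (util I pr i ti ` Pow S) \<longrightarrow> rk i B \<le> rk i B')"
      using am_mem[OF Tne, of "rk i"] unfolding fe T_def by auto
  next
    assume h: "util I pr i ti B = Max (util I pr i ti ` Pow S) \<and>
     (\<forall>B'\<in>Pow S. util I pr i ti B' = Max (util I pr i ti ` Pow S) \<longrightarrow> rk i B \<le> rk i B')"
    have "arg_min (rk i) (\<lambda>B. B \<in> T) = B"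
      by (rule am_unique[OF inj]) (use h B in \<open>auto simp: T_def\<close>)
    then show "fav I pr rk i ti S = B" using fe by simp
  qed
qed

lemma fav_m:
  assumes i: "i < n" and Sm: "S \<subseteq> {..<m}" and inj: "inj_on (rk i) (Pow S)"
  shows "(\<lambda>t. fav I pr rk i (\<lambda>j. t (i,j)) S) \<in> measurable PP (count_space (Pow S))"
proof -
  have finS: "finite S" using Sm by (auto intro: finite_subset)
  have "finite (Pow S)" using finS by simp
  moreover have "(\<lambda>t. fav I pr rk i (\<lambda>j. t (i,j)) S) \<in> space PP \<rightarrow> Pow S"
    using fav_prop[OF finS] by auto
  moreover have "(\<lambda>t. fav I pr rk i (\<lambda>j. t (i,j)) S) -` {B} \<inter> space PP \<in> sets PP" if B: "B \<in> Pow S" for B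
  proof -
    have BS: "B \<subseteq> S" using B by auto
    have Bm: "B \<subseteq> {..<m}" using BS Sm by auto
    have eq: "(\<lambda>t. fav I pr rk i (\<lambda>j. t (i,j)) S) -` {B} \<inter> space PP =
      {t \<in> space PP. util I pr i (\<lambda>j. t (i,j)) B = Max ((\<lambda>B. util I pr i (\<lambda>j. t (i,j)) B) ` Pow S) \<and>
        (\<forall>B'\<in>Pow S. util I pr i (\<lambda>j. t (i,j)) B' = Max ((\<lambda>B. util I pr i (\<lambda>j. t (i,j)) B) ` Pow S) \<longrightarrow> rk i B \<le> rk i B')}"
      using fav_char[where rk=rk and i=i and I=I and pr=pr, OF finS inj BS] by auto
    have um: "(\<lambda>t. util I pr i (\<lambda>j. t (i,j)) B') \<in> borel_measurable PP" if "B' \<in> Pow S" for B'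
      using util_m[OF i] that Sm by auto
    have Um: "(\<lambda>t. Max ((\<lambda>B. util I pr i (\<lambda>j. t (i,j)) B) ` Pow S)) \<in> borel_measurable PP"
      by (rule Umax_m[OF i Sm])
    have s1: "{t \<in> space PP. util I pr i (\<lambda>j. t (i,j)) B' = Max ((\<lambda>B. util I pr i (\<lambda>j. t (i,j)) B) ` Pow S)} \<in> sets PP"
      if "B' \<in> Pow S" for B'
      using um[OF that] Um by measurable
    have "Measurable.pred PP (\<lambda>t. util I pr i (\<lambda>j. t (i,j)) B = Max ((\<lambda>B. util I pr i (\<lambda>j. t (i,j)) B) ` Pow S) \<and>
        (\<forall>B'\<in>Pow S. util I pr i (\<lambda>j. t (i,j)) B' = Max ((\<lambda>B. util I pr i (\<lambda>j. t (i,j)) B) ` Pow S) \<longrightarrow> rk i B \<le> rk i B'))"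
    proof (intro pred_intros_logic pred_intros_finite)
      show "finite (Pow S)" using finS by simp
      show "Measurable.pred PP (\<lambda>t. util I pr i (\<lambda>j. t (i,j)) B = Max ((\<lambda>B. util I pr i (\<lambda>j. t (i,j)) B) ` Pow S))"
        unfolding pred_def using s1[OF B] .
      fix B' assume "B' \<in> Pow S"
      show "Measurable.pred PP (\<lambda>t. util I pr i (\<lambda>j. t (i,j)) B' = Max ((\<lambda>B. util I pr i (\<lambda>j. t (i,j)) B) ` Pow S))"
        unfolding pred_def using s1[OF \<open>B' \<in> Pow S\<close>] .
      show "Measurable.pred PP (\<lambda>t. rk i B \<le> rk i B')" by simp
    qed
    then show ?thesis unfolding eq pred_def .
  qed
  ultimately show ?thesis by (simp add: measurable_count_space_eq2)
qed


lemma run_m: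
  assumes ties: "\<forall>i<n. inj_on (rk i) (Pow {..<m})" and l: "l \<le> n"
  shows "(\<lambda>t. fst (spem_run m I pr \<delta> rk t l)) \<in> measurable PP (count_space (Pow {..<m})) \<and>
         (\<lambda>t. snd (spem_run m I pr \<delta> rk t l)) \<in> borel_measurable PP"
  using l
proof (induction l)
  case 0 then show ?case by simp
next
  case (Suc l)
  then have ln: "l < n" by simp
  have f1: "(\<lambda>t. fst (spem_run m I pr \<delta> rk t l)) \<in> measurable PP (count_space (Pow {..<m}))"
    and f2: "(\<lambda>t. snd (spem_run m I pr \<delta> rk t l)) \<in> borel_measurable PP" using Suc ln by auto
  define F1 where "F1 S t = fst (stp I pr \<delta> rk l (\<lambda>j. t (l,j)) (S, snd (spem_run m I pr \<delta> rk t l)))" for S t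
  define F2 where "F2 S t = snd (stp I pr \<delta> rk l (\<lambda>j. t (l,j)) (S, snd (spem_run m I pr \<delta> rk t l)))" for S t
  have e1: "fst (spem_run m I pr \<delta> rk t (Suc l)) = F1 (fst (spem_run m I pr \<delta> rk t l)) t" for t
    unfolding F1_def run_Suc by simp
  have e2: "snd (spem_run m I pr \<delta> rk t (Suc l)) = F2 (fst (spem_run m I pr \<delta> rk t l)) t" for t
    unfolding F2_def run_Suc by simp
  have mS: "(\<lambda>t. F1 S t) \<in> measurable PP (count_space (Pow {..<m})) \<and> (\<lambda>t. F2 S t) \<in> borel_measurable PP"
    if S: "S \<in> Pow {..<m}" for S
  proof -
    have Sm: "S \<subseteq> {..<m}" using S by auto
    have inj: "inj_on (rk l) (Pow S)"
      by (rule inj_on_subset[of _ "Pow {..<m}"]) (use ties ln Sm in auto)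
    have fm: "(\<lambda>t. fav I pr rk l (\<lambda>j. t (l,j)) S) \<in> measurable PP (count_space (Pow S))"
      by (rule fav_m[where rk=rk and I=I and pr=pr, OF ln Sm inj])
    define G1 where "G1 B t = (if \<delta> l S \<le> util I pr l (\<lambda>j. t (l,j)) B then S - B else S)" for B t
    define G2 where "G2 B t = (if \<delta> l S \<le> util I pr l (\<lambda>j. t (l,j)) B
         then snd (spem_run m I pr \<delta> rk t l) + \<delta> l S + (\<Sum>j\<in>B. pr l j) else snd (spem_run m I pr \<delta> rk t l))" for B t
    have F1e: "F1 S t = G1 (fav I pr rk l (\<lambda>j. t (l,j)) S) t" for t
      unfolding F1_def G1_def stp_def Let_def by simp
    have F2e: "F2 S t = G2 (fav I pr rk l (\<lambda>j. t (l,j)) S) t" for t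
      unfolding F2_def G2_def stp_def Let_def by simp
    have pB: "{t \<in> space PP. \<delta> l S \<le> util I pr l (\<lambda>j. t (l,j)) B} \<in> sets PP" if "B \<in> Pow S" for B
    proof -
      have "(\<lambda>t. util I pr l (\<lambda>j. t (l,j)) B) \<in> borel_measurable PP" using util_m[OF ln] that Sm by auto
      then show ?thesis by measurable
    qed
    have G1m: "(\<lambda>t. G1 B t) \<in> measurable PP (count_space (Pow {..<m}))" if "B \<in> Pow S" for B
      unfolding G1_def by (rule measurable_If) (use Sm pB[OF that] in \<open>auto intro!: measurable_const\<close>)
    have G2m: "(\<lambda>t. G2 B t) \<in> borel_measurable PP" if "B \<in> Pow S" for B
      unfolding G2_def by (rule measurable_If) (use f2 pB[OF that] in auto)
    have "(\<lambda>t. G1 (fav I pr rk l (\<lambda>j. t (l,j)) S) t) \<in> measurable PP (count_space (Pow {..<m}))"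
      by (rule measurable_compose_countable'[OF G1m fm]) (use finite_Pow_iff Sm in \<open>auto intro: countable_finite finite_subset\<close>)
    moreover have "(\<lambda>t. G2 (fav I pr rk l (\<lambda>j. t (l,j)) S) t) \<in> borel_measurable PP"
      by (rule measurable_compose_countable'[OF G2m fm]) (use finite_Pow_iff Sm in \<open>auto intro: countable_finite finite_subset\<close>)
    ultimately show ?thesis unfolding F1e F2e by simp
  qed
  have "(\<lambda>t. F1 (fst (spem_run m I pr \<delta> rk t l)) t) \<in> measurable PP (count_space (Pow {..<m}))"
    by (rule measurable_compose_countable'[OF _ f1]) (use mS in \<open>auto intro: countable_finite\<close>)
  moreover have "(\<lambda>t. F2 (fst (spem_run m I pr \<delta> rk t l)) t) \<in> borel_measurable PP"
    by (rule measurable_compose_countable'[OF _ f1]) (use mS in \<open>auto intro: countable_finite\<close>)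
  ultimately show ?case unfolding e1 e2 by simp
qed

lemma rev_m:
  assumes ties: "\<forall>i<n. inj_on (rk i) (Pow {..<m})"
  shows "spem_rev n m I pr \<delta> rk \<in> borel_measurable PP"
  unfolding spem_rev_def using run_m[OF ties, of n] by simp

end

definition ext_meas :: "nat \<Rightarrow> nat \<Rightarrow> (nat \<Rightarrow> nat \<Rightarrow> real measure) \<Rightarrow> nat \<times> nat \<Rightarrow> real measure" where
  "ext_meas n m D k = (if k \<in> {..<n} \<times> {..<m} then D (fst k) (snd k) else return borel 0)"

lemma prof_ext: "prof n m D = PiM ({..<n} \<times> {..<m}) (ext_meas n m D)"
  unfolding prof_def ext_meas_def by (rule PiM_cong) auto

lemma ext_prob:
  assumes D: "\<forall>i<n. \<forall>j<m. prob_space (D i j) \<and> sets (D i j) = sets borel \<and> measure (D i j) {0..H} = 1"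
  shows "\<forall>k. prob_space (ext_meas n m D k) \<and> sets (ext_meas n m D k) = sets borel"
    "\<forall>k\<in>{..<n} \<times> {..<m}. measure (ext_meas n m D k) {0..H} = 1"
  using D by (auto simp: ext_meas_def prob_space_return)

lemma pmf_exp_le:
  fixes f :: "'a \<Rightarrow> real"
  assumes b: "\<forall>a\<in>set_pmf q. f a \<le> c" and c: "0 \<le> c"
  shows "measure_pmf.expectation q f \<le> c"
proof (cases "integrable (measure_pmf q) f")
  case True
  have "measure_pmf.expectation q f \<le> measure_pmf.expectation q (\<lambda>_. c)"
    by (rule integral_mono_AE[OF True]) (use b in \<open>auto simp: AE_measure_pmf_iff\<close>)
  then show ?thesis by simp
next
  case False then show ?thesis using c by (simp add: not_integrable_integral_eq)
qed

lemma zero_mech_BIC: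
  assumes cadd: "\<forall>i<n. constrained_family m (I i)"
    and pp: "prob_space (prof n m D)"
  shows "BIC_IR_mech n m H I D (\<lambda>t. return_pmf (\<lambda>_. {})) (\<lambda>_ _. 0)"
proof -
  have e: "\<And>i. i < n \<Longrightarrow> {} \<in> I i" using cadd unfolding constrained_family_def by auto
  have v0: "val I i ti {} = 0" if "i < n" for i ti
  proof -
    have "{R. R \<subseteq> {} \<and> R \<in> I i} = {{}}" using e[OF that] by auto
    then show ?thesis unfolding val_def by simp
  qed
  have iu: "interim_util n m I D (\<lambda>t. return_pmf (\<lambda>_. {})) (\<lambda>_ _. 0) i ti s = 0" if "i < n" for i ti s
    unfolding interim_util_def using v0[OF that] by simp
  show ?thesis
    unfolding BIC_IR_mech_def well_defined_mech_def feasible_alloc_def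
    using iu v0 pp by (auto simp: prob_space.finite_measure finite_measure.integrable_const)
qed

lemma upd_merge:
  fixes n m :: nat
  assumes i: "i < n"
  shows "upd_bidder m (merge ({i} \<times> {..<m}) ({..<n} \<times> {..<m} - {i} \<times> {..<m}) (y, x)) i s
     = merge ({i} \<times> {..<m}) ({..<n} \<times> {..<m} - {i} \<times> {..<m}) (\<lambda>k. s (snd k), x)"
  unfolding upd_bidder_def merge_def by (auto simp: fun_eq_iff)

lemma merge_row:
  fixes n m :: nat
  shows "merge ({i} \<times> {..<m}) ({..<n} \<times> {..<m} - {i} \<times> {..<m}) (y, x)
     = merge ({i} \<times> {..<m}) ({..<n} \<times> {..<m} - {i} \<times> {..<m}) (\<lambda>k. y (i, snd k), x)"
  unfolding merge_def by (auto simp: fun_eq_iff)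

lemma rev_bound_i:
  assumes cadd: "\<forall>i<n. constrained_family m (I i)"
    and D: "\<forall>i<n. \<forall>j<m. prob_space (D i j) \<and> sets (D i j) = sets borel \<and> measure (D i j) {0..H} = 1"
    and BIC: "BIC_IR_mech n m H I D x p" and i: "i < n" and mH: "0 \<le> real m * H"
  shows "integral\<^sup>L (prof n m D) (p i) \<le> real m * H"
proof -
  define K where "K = {..<n} \<times> {..<m}"
  define Ki where "Ki = {i} \<times> {..<m}"
  define Kr where "Kr = {..<n} \<times> {..<m} - {i} \<times> {..<m}"
  define Mk where "Mk = ext_meas n m D"
  have PM: "\<forall>k. prob_space (Mk k) \<and> sets (Mk k) = sets borel" using ext_prob(1)[OF D] unfolding Mk_def .
  have HM: "\<forall>k\<in>K. measure (Mk k) {0..H} = 1" using ext_prob(2)[OF D] unfolding Mk_def K_def .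
  interpret PS: product_sigma_finite Mk using PM by (simp add: product_sigma_finite_def prob_space_imp_sigma_finite)
  have KU: "K = Ki \<union> Kr" "Ki \<inter> Kr = {}" unfolding K_def Ki_def Kr_def using i by auto
  have fin: "finite Ki" "finite Kr" unfolding Ki_def Kr_def by auto
  have pf: "prof n m D = PiM K Mk" unfolding prof_ext K_def Mk_def ..
  have pKi: "prob_space (PiM Ki Mk)" by (rule prob_space_PiM) (use PM in auto)
  have pKr: "prob_space (PiM Kr Mk)" by (rule prob_space_PiM) (use PM in auto)
  have wd: "well_defined_mech n m H I D x p" using BIC unfolding BIC_IR_mech_def by auto
  have ip: "integrable (PiM K Mk) (p i)" using wd i unfolding well_defined_mech_def pf by auto
  define \<Phi> where "\<Phi> y = (\<integral>z. p i (merge Ki Kr (y, z)) \<partial>PiM Kr Mk)" for y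
  have e1: "integral\<^sup>L (PiM K Mk) (p i) = integral\<^sup>L (PiM Ki Mk) \<Phi>"
    unfolding \<Phi>_def using PS.product_integral_fold[OF KU(2) fin, of "p i"] ip KU(1) by simp
  have Phib: "\<Phi> y \<le> real m * H" if yb: "\<forall>j<m. y (i, j) \<in> {0..H}" for y
  proof -
    define s where "s = (\<lambda>j. y (i, j))"
    have sbox: "in_box m H s" unfolding in_box_def s_def using yb by auto
    have ipu: "integrable (PiM K Mk) (\<lambda>t. p i (upd_bidder m t i s))"
      and iev: "integrable (PiM K Mk) (\<lambda>t. measure_pmf.expectation (x (upd_bidder m t i s)) (\<lambda>A. val I i s (A i)))"
      using wd i sbox unfolding well_defined_mech_def pf by auto
    have IR: "interim_util n m I D x p i s s \<ge> 0" using BIC i sbox unfolding BIC_IR_mech_def by auto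
    have "(\<integral>t. p i (upd_bidder m t i s) \<partial>PiM K Mk) \<le> (\<integral>t. measure_pmf.expectation (x (upd_bidder m t i s)) (\<lambda>A. val I i s (A i)) \<partial>PiM K Mk)"
      using IR unfolding interim_util_def pf Bochner_Integration.integral_diff[OF iev ipu] by simp
    also have "\<dots> \<le> (\<integral>t. real m * H \<partial>PiM K Mk)"
    proof (rule integral_mono[OF iev])
      show "integrable (PiM K Mk) (\<lambda>t. real m * H)"
        using prob_space_PiM[of K Mk] PM by (simp add: prob_space.finite_measure finite_measure.integrable_const)
      fix t
      show "measure_pmf.expectation (x (upd_bidder m t i s)) (\<lambda>A. val I i s (A i)) \<le> real m * H"
      proof (rule pmf_exp_le[OF _ mH], intro ballI)
        fix A assume A: "A \<in> set_pmf (x (upd_bidder m t i s))"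
        have Am: "A i \<subseteq> {..<m}" using wd A i unfolding well_defined_mech_def feasible_alloc_def by blast
        have fA: "finite (A i)" using Am by (auto intro: finite_subset)
        have e: "{} \<in> I i" using cadd i unfolding constrained_family_def by auto
        have "val I i s (A i) \<le> H * real (card (A i))"
          by (rule val_le[where I=I and i=i, OF fA e]) (use Am sbox in \<open>auto simp: in_box_def\<close>)
        also have "\<dots> \<le> H * real m"
        proof (cases "m = 0")
          case True then show ?thesis using Am by simp
        next
          case False
          then have "0 \<le> H" using mH by (simp add: zero_le_mult_iff)
          moreover have "card (A i) \<le> m" using card_mono[OF _ Am] by simp
          ultimately show ?thesis by (simp add: mult_left_mono)
        qed
        finally show "val I i s (A i) \<le> real m * H" by (simp add: mult.commute)
      qed
    qed
    also have "\<dots> = real m * H" using prob_space_PiM[of K Mk] PM by (simp add: prob_space.prob_space)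
    finally have a: "(\<integral>t. p i (upd_bidder m t i s) \<partial>PiM K Mk) \<le> real m * H" .
    have b: "(\<integral>t. p i (upd_bidder m t i s) \<partial>PiM K Mk) =
       (\<integral>y'. (\<integral>z. p i (upd_bidder m (merge Ki Kr (y', z)) i s) \<partial>PiM Kr Mk) \<partial>PiM Ki Mk)"
      using PS.product_integral_fold[OF KU(2) fin, of "\<lambda>t. p i (upd_bidder m t i s)"] ipu KU(1) by simp
    also have "\<dots> = (\<integral>y'. \<Phi> y \<partial>PiM Ki Mk)"
    proof (rule Bochner_Integration.integral_cong[OF refl])
      fix y' assume "y' \<in> space (PiM Ki Mk)"
      have "upd_bidder m (merge Ki Kr (y', z)) i s = merge Ki Kr (y, z)" for z
        unfolding Ki_def Kr_def upd_merge[OF i] merge_row[of i m n y] s_def by simp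
      then show "(\<integral>z. p i (upd_bidder m (merge Ki Kr (y', z)) i s) \<partial>PiM Kr Mk) = \<Phi> y"
        unfolding \<Phi>_def by simp
    qed
    also have "\<dots> = \<Phi> y" using pKi by (simp add: prob_space.prob_space)
    finally show ?thesis using a by simp
  qed
  have ae: "AE y in PiM Ki Mk. \<forall>j<m. y (i, j) \<in> {0..H}"
  proof -
    have "AE y in PiM Ki Mk. box Ki H y"
      by (rule AE_box) (use fin PM HM KU in auto)
    then show ?thesis by eventually_elim (auto simp: box_def Ki_def)
  qed
  have "integral\<^sup>L (PiM Ki Mk) \<Phi> \<le> real m * H"
  proof (cases "integrable (PiM Ki Mk) \<Phi>")
    case True
    have "integral\<^sup>L (PiM Ki Mk) \<Phi> \<le> (\<integral>y. real m * H \<partial>PiM Ki Mk)"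
      by (rule integral_mono_AE[OF True]) (use pKi ae Phib in \<open>auto simp: prob_space.finite_measure finite_measure.integrable_const elim: eventually_mono\<close>)
    then show ?thesis using pKi by (simp add: prob_space.prob_space)
  next
    case False then show ?thesis using mH by (simp add: not_integrable_integral_eq)
  qed
  then show ?thesis using e1 pf by simp
qed

lemma opt_nonneg:
  assumes cadd: "\<forall>i<n. constrained_family m (I i)"
    and D: "\<forall>i<n. \<forall>j<m. prob_space (D i j) \<and> sets (D i j) = sets borel \<and> measure (D i j) {0..H} = 1"
  shows "0 \<le> OPT n m H I D"
proof -
  have PM: "\<forall>k. prob_space (ext_meas n m D k) \<and> sets (ext_meas n m D k) = sets borel" using ext_prob(1)[OF D] .
  have pp: "prob_space (prof n m D)" unfolding prof_ext by (rule prob_space_PiM) (use PM in auto)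
  have mH: "0 \<le> real m * H" if "0 < n"
  proof (cases "m = 0")
    case False
    then have "measure (D 0 0) {0..H} = 1" using D that by auto
    then have "{0..H} \<noteq> ({} :: real set)" by (metis measure_empty zero_neq_one)
    then have "0 \<le> H" by simp
    then show ?thesis by simp
  qed simp
  define X where "X = {mech_rev n m D p | x p. BIC_IR_mech n m H I D x p}"
  have z: "0 \<in> X" unfolding X_def mech_rev_def using zero_mech_BIC[OF cadd pp, of H] by force
  have bdd: "bdd_above X"
  proof (rule bdd_aboveI)
    fix v assume "v \<in> X"
    then obtain x p where v: "v = mech_rev n m D p" and B: "BIC_IR_mech n m H I D x p" unfolding X_def by auto
    have ip: "\<And>i. i \<in> {..<n} \<Longrightarrow> integrable (prof n m D) (p i)"
      using B unfolding BIC_IR_mech_def well_defined_mech_def by auto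
    have "v = (\<Sum>i<n. integral\<^sup>L (prof n m D) (p i))"
      unfolding v mech_rev_def by (rule Bochner_Integration.integral_sum[OF ip])
    also have "\<dots> \<le> real n * (real m * H)"
    proof (cases "n = 0")
      case False
      then have "\<And>i. i \<in> {..<n} \<Longrightarrow> integral\<^sup>L (prof n m D) (p i) \<le> real m * H"
        using rev_bound_i[OF cadd D B _ mH] by auto
      then show ?thesis using sum_bounded_above[of "{..<n}" "\<lambda>i. integral\<^sup>L (prof n m D) (p i)" "real m * H"] by simp
    qed simp
    finally show "v \<le> real n * (real m * H)" .
  qed
  show ?thesis unfolding OPT_def X_def[symmetric] using cSup_upper[OF z bdd] .
qed

lemma tsf_clip:
  assumes "tsf H C g"
  shows "tsf H C (\<lambda>x. max 0 (min C (g x)))"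
proof -
  obtain U1 U2 g0 g1 g2 where U: "upper U1" "upper U2" "U2 \<subseteq> U1"
    and g: "g0 \<in> {0..C}" "g1 \<in> {0..C}" "g2 \<in> {0..C}"
    and fe: "\<forall>x\<in>{0..H}. g x = (if x \<in> U2 then g2 else if x \<in> U1 then g1 else g0)"
    using assms unfolding tsf_def by blast
  have "\<forall>x\<in>{0..H}. max 0 (min C (g x)) = (if x \<in> U2 then g2 else if x \<in> U1 then g1 else g0)"
    using fe g by auto
  then show ?thesis unfolding tsf_def using U g by blast
qed

lemma rev_box:
  assumes cadd: "\<forall>i<n. constrained_family m (I i)"
    and prices: "\<forall>i<n. \<forall>j<m. pr i j \<ge> 0"
    and fees: "\<forall>i<n. \<forall>S. S \<subseteq> {..<m} \<longrightarrow> \<delta> i S \<ge> 0"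
    and H: "0 \<le> H" and bt: "box ({..<n} \<times> {..<m}) H t"
  shows "spem_rev n m I pr \<delta> rk t \<in> {0..real m * H}"
proof -
  have e: "\<forall>i<n. {} \<in> I i" using cadd unfolding constrained_family_def by auto
  have bx: "\<forall>i<n. \<forall>j<m. t (i,j) \<in> {0..H}" using bt unfolding box_def by auto
  have rb: "0 \<le> snd (spem_run m I pr \<delta> rk t n) \<and> snd (spem_run m I pr \<delta> rk t n) \<le> H * (real m - real (card (fst (spem_run m I pr \<delta> rk t n))))"
    by (rule run_bound[OF prices fees e bx]) simp
  have "real m - real (card (fst (spem_run m I pr \<delta> rk t n))) \<le> real m" by simp
  then have "H * (real m - real (card (fst (spem_run m I pr \<delta> rk t n)))) \<le> H * real m"
    using H by (rule mult_left_mono)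
  then show ?thesis using rb unfolding spem_rev_def by (simp add: mult.commute)
qed

theorem mainTheorem20:
  fixes n m :: nat and H \<xi> :: real
    and D Dh :: "nat \<Rightarrow> nat \<Rightarrow> real measure"
    and I :: "nat \<Rightarrow> nat set set"
    and pr :: "nat \<Rightarrow> nat \<Rightarrow> real" and \<delta> :: "nat \<Rightarrow> nat set \<Rightarrow> real"
    and rk :: "nat \<Rightarrow> nat set \<Rightarrow> nat"
  assumes cadd: "\<forall>i<n. constrained_family m (I i)"
    and D: "\<forall>i<n. \<forall>j<m. prob_space (D i j) \<and> sets (D i j) = sets borel \<and> measure (D i j) {0..H} = 1"
    and Dh: "\<forall>i<n. \<forall>j<m. prob_space (Dh i j) \<and> sets (Dh i j) = sets borel \<and> measure (Dh i j) {0..H} = 1"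
    and K: "\<forall>i<n. \<forall>j<m. kolmogorov_dist (D i j) (Dh i j) \<le> \<xi>"
    and prices: "\<forall>i<n. \<forall>j<m. pr i j \<ge> 0"
    and fees: "\<forall>i<n. \<forall>S. S \<subseteq> {..<m} \<longrightarrow> \<delta> i S \<ge> 0"
    and ties: "\<forall>i<n. inj_on (rk i) (Pow {..<m})"
  shows "\<bar>spem_exp_rev n m I pr \<delta> rk D - spem_exp_rev n m I pr \<delta> rk Dh\<bar>
           \<le> 2 * real n * real m * \<xi> * (real m * H + OPT n m H I D)"
proof -
  define KK where "KK = {..<n} \<times> {..<m}"
  define M where "M = ext_meas n m D"
  define M' where "M' = ext_meas n m Dh"
  have PM: "\<forall>k. prob_space (M k) \<and> sets (M k) = sets borel" using ext_prob(1)[OF D] unfolding M_def .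
  have PM': "\<forall>k. prob_space (M' k) \<and> sets (M' k) = sets borel" using ext_prob(1)[OF Dh] unfolding M'_def .
  have HM: "\<forall>k\<in>KK. measure (M k) {0..H} = 1" using ext_prob(2)[OF D] unfolding M_def KK_def .
  have HM': "\<forall>k\<in>KK. measure (M' k) {0..H} = 1" using ext_prob(2)[OF Dh] unfolding M'_def KK_def .
  have KD: "\<forall>k\<in>KK. kolmogorov_dist (M k) (M' k) \<le> \<xi>" using K unfolding M_def M'_def KK_def ext_meas_def by auto
  have eD: "spem_exp_rev n m I pr \<delta> rk D = integral\<^sup>L (PiM KK M) (spem_rev n m I pr \<delta> rk)"
    unfolding spem_exp_rev_def prof_ext M_def KK_def ..
  have eDh: "spem_exp_rev n m I pr \<delta> rk Dh = integral\<^sup>L (PiM KK M') (spem_rev n m I pr \<delta> rk)"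
    unfolding spem_exp_rev_def prof_ext M'_def KK_def ..
  have OPT: "0 \<le> OPT n m H I D" by (rule opt_nonneg[OF cadd D])
  show ?thesis
  proof (cases "KK = {}")
    case True
    then have "PiM KK M = PiM KK M'" by (simp add: PiM_empty)
    moreover have "n = 0 \<or> m = 0" using True unfolding KK_def by auto
    ultimately show ?thesis unfolding eD eDh by auto
  next
    case False
    then have n0: "0 < n" and m0: "0 < m" unfolding KK_def by auto
    have H: "0 \<le> H"
    proof -
      have "measure (D 0 0) {0..H} = 1" using D n0 m0 by auto
      then have "{0..H} \<noteq> ({} :: real set)" by (metis measure_empty zero_neq_one)
      then show ?thesis by simp
    qed
    have x0: "0 \<le> \<xi>"
    proof -
      have "prob_space (D 0 0)" "prob_space (Dh 0 0)" using D Dh n0 m0 by auto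
      from kol_le[OF this] K n0 m0 have "\<bar>measure (D 0 0) {..0} - measure (Dh 0 0) {..0}\<bar> \<le> \<xi>" by auto
      then show ?thesis by linarith
    qed
    define C where "C = real m * H"
    have C: "0 \<le> C" unfolding C_def using H by simp
    have sM: "\<And>k. k \<in> {..<n} \<times> {..<m} \<Longrightarrow> sets (M k) = sets borel" using PM by auto
    have sM': "\<And>k. k \<in> {..<n} \<times> {..<m} \<Longrightarrow> sets (M' k) = sets borel" using PM' by auto
    have rm: "spem_rev n m I pr \<delta> rk \<in> borel_measurable (PiM KK M)"
      unfolding KK_def by (rule rev_m[OF sM ties])
    have rm': "spem_rev n m I pr \<delta> rk \<in> borel_measurable (PiM KK M')"
      unfolding KK_def by (rule rev_m[OF sM' ties])
    define f where "f t = max 0 (min C (spem_rev n m I pr \<delta> rk t))" for t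
    have fm: "f \<in> borel_measurable (PiM KK M)" unfolding f_def using rm by measurable
    have fm': "f \<in> borel_measurable (PiM KK M')" unfolding f_def using rm' by measurable
    have fb: "\<forall>t. f t \<in> {0..C}" unfolding f_def using C by auto
    have ft: "\<forall>k\<in>KK. \<forall>t. box KK H t \<longrightarrow> tsf H C (\<lambda>x. f (t(k:=x)))"
    proof (intro ballI allI impI)
      fix k t assume k: "k \<in> KK" and bt: "box KK H t"
      have "tsf H (real m * H) (\<lambda>x. spem_rev n m I pr \<delta> rk (t(k:=x)))"
        by (rule spem_tsf[OF cadd prices fees ties H]) (use k bt KK_def in auto)
      then show "tsf H C (\<lambda>x. f (t(k:=x)))" unfolding f_def C_def by (rule tsf_clip)
    qed
    have hyb: "\<bar>integral\<^sup>L (PiM KK M) f - integral\<^sup>L (PiM KK M') f\<bar> \<le> 2 * real (card KK) * \<xi> * C"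
      using hybrid_aux[OF _ PM PM' H C, of KK \<xi>] HM HM' KD fm fb ft unfolding KK_def by auto
    have eq: "integral\<^sup>L (PiM KK L) (spem_rev n m I pr \<delta> rk) = integral\<^sup>L (PiM KK L) f"
      if L: "\<forall>k. prob_space (L k) \<and> sets (L k) = sets borel" "\<forall>k\<in>KK. measure (L k) {0..H} = 1"
        "spem_rev n m I pr \<delta> rk \<in> borel_measurable (PiM KK L)" "f \<in> borel_measurable (PiM KK L)" for L
    proof (rule integral_cong_AE[OF L(3,4)])
      have "AE t in PiM KK L. box KK H t" by (rule AE_box) (use L KK_def in auto)
      then show "AE t in PiM KK L. spem_rev n m I pr \<delta> rk t = f t"
      proof (rule eventually_mono)
        fix t assume "box KK H t"
        then have "spem_rev n m I pr \<delta> rk t \<in> {0..C}"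
          unfolding C_def KK_def by (rule rev_box[OF cadd prices fees H])
        then show "spem_rev n m I pr \<delta> rk t = f t" unfolding f_def by auto
      qed
    qed
    have cK: "real (card KK) = real n * real m" unfolding KK_def by (simp add: card_cartesian_product)
    have "\<bar>spem_exp_rev n m I pr \<delta> rk D - spem_exp_rev n m I pr \<delta> rk Dh\<bar> \<le> 2 * real n * real m * \<xi> * (real m * H)"
      using hyb eq[OF PM HM rm fm] eq[OF PM' HM' rm' fm'] unfolding eD eDh cK C_def by simp
    also have "\<dots> \<le> 2 * real n * real m * \<xi> * (real m * H + OPT n m H I D)"
      by (rule mult_left_mono) (use OPT x0 in auto)
    finally show ?thesis .
  qed
qed

end
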